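(* Let $\mathcal{G}_n$ be the set of binary words $w=w_1\cdots w_{2n}$ with $n$ zeros and $n$ ones, and let $X_n$ be the value of $\mathrm{da}(w)=|\{i\in[n]: w_i\neq w_{2n+1-i}\}|$ for $w$ uniformly random in $\mathcal{G}_n$. Then $X_n$ converges to a normal distribution (after standardization), with $$\mathbb{E}X_n=\frac n2+O(1),\qquad \mathbb{V}X_n=\frac n4+O(1).$$
   Context: $[n]=\{1,2,\dots,n\}$. *)

theory Defs
  imports "HOL-Probability.Probability" "HOL-Library.Landau_Symbols"
begin

text \<open>Binary words of length 2n with n zeros and n ones; letter 1 is True, 0 is False.\<close>
definition G :: "nat \<Rightarrow> bool list set" where
  "G n = {w. length w = 2 * n \<and> length (filter id w) = n}"

text \<open>da(w) = |{i in [n] : w_i ~= w_(2n+1-i)}|, with 1-based positions (list index i-1).\<close>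
definition da :: "nat \<Rightarrow> bool list \<Rightarrow> nat" where
  "da n w = card {i \<in> {1..n}. w ! (i - 1) \<noteq> w ! (2 * n - i)}"

definition unifG :: "nat \<Rightarrow> bool list pmf" where
  "unifG n = pmf_of_set (G n)"

definition meanX :: "nat \<Rightarrow> real" where
  "meanX n = measure_pmf.expectation (unifG n) (\<lambda>w. real (da n w))"

definition varX :: "nat \<Rightarrow> real" where
  "varX n = measure_pmf.variance (unifG n) (\<lambda>w. real (da n w))"

end

theory Submission
  imports Defs
begin


lemma lists_Suc_eq: "{xs::'a list. length xs = Suc n} = (\<lambda>(x,xs). x#xs) ` (UNIV \<times> {xs. length xs = n})"
  by (auto simp: length_Suc_conv image_def)

lemma sum_lists_Suc:
  fixes f :: "'a::finite list \<Rightarrow> real"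
  shows "(\<Sum>xs\<in>{xs. length xs = Suc n}. f xs) = (\<Sum>x\<in>UNIV. \<Sum>xs\<in>{xs. length xs = n}. f (x#xs))"
proof -
  have inj: "inj_on (\<lambda>(x,xs). x#xs) (UNIV \<times> {xs::'a list. length xs = n})"
    by (auto simp: inj_on_def)
  have fin: "finite {xs::'a list. length xs = n}"
    using finite_lists_length_eq[of "UNIV::'a set" n] by simp
  show ?thesis
    unfolding lists_Suc_eq sum.reindex[OF inj]
    by (simp add: sum.cartesian_product fin split_def)
qed

lemma fin_lists: "finite {xs::'a::finite list. length xs = n}"
  using finite_lists_length_eq[of "UNIV::'a set" n] by simp

definition c11 :: "(bool \<times> bool) list \<Rightarrow> nat" where
  "c11 p = length (filter (\<lambda>(a,b). a \<and> b) p)"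
definition cmx :: "(bool \<times> bool) list \<Rightarrow> nat" where
  "cmx p = length (filter (\<lambda>(a,b). a \<noteq> b) p)"

definition coef :: "nat \<Rightarrow> nat \<Rightarrow> nat \<Rightarrow> real" where
  "coef n a d = (if a + d \<le> n then fact n / (fact a * fact d * fact (n - a - d)) * 2 ^ d else 0)"

lemma coef_pascal:
  "coef (Suc n) a d = coef n a d + (if a > 0 then coef n (a - 1) d else 0)
      + (if d > 0 then 2 * coef n a (d - 1) else 0)"
proof (cases "a + d \<le> Suc n")
  case False
  then show ?thesis by (auto simp: coef_def)
next
  case True
  define b where "b = Suc n - a - d"
  have nb: "Suc n = a + d + b" using True b_def by simp
  define D where "D = fact a * fact d * fact b * (1::real)"
  have Dpos: "D > 0" unfolding D_def by simp
  have t0: "coef (Suc n) a d = (fact n::real) * real (a + d + b) / D * 2 ^ d"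
    using True unfolding coef_def D_def b_def
    by (simp add: fact_Suc nb[symmetric] algebra_simps)
  have t1: "coef n a d = (fact n::real) * real b / D * 2 ^ d"
  proof (cases b)
    case 0 then show ?thesis using nb by (simp add: coef_def)
  next
    case (Suc b')
    have h: "n - (a + d) = b'" "a + d \<le> n" using nb Suc by simp_all
    have fb: "(fact b::real) = real b * fact b'" using Suc by (simp add: fact_Suc)
    have "coef n a d = fact n/(fact a * fact d * fact b') * 2^d" by (simp add: coef_def h)
    moreover have "fact n * real b / D = fact n/(fact a * fact d * fact b')"
      unfolding D_def fb using Suc by (simp add: divide_simps)
    ultimately show ?thesis by simp
  qed
  have t2: "(if a > 0 then coef n (a - 1) d else 0) = (fact n::real) * real a / D * 2 ^ d"
  proof (cases a)
    case 0 then show ?thesis by simp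
  next
    case (Suc a')
    have h: "n - (a' + d) = b" "a' + d \<le> n" using nb Suc by simp_all
    have fb: "(fact a::real) = real a * fact a'" using Suc by (simp add: fact_Suc)
    have "coef n a' d = fact n/(fact a' * fact d * fact b) * 2^d" by (simp add: coef_def h)
    moreover have "fact n * real a / D * 2^d = fact n/(fact a' * fact d * fact b) * 2^d"
      unfolding D_def fb using Suc by (simp add: divide_simps)
    ultimately show ?thesis using Suc by (simp only: if_True zero_less_Suc diff_Suc_1)
  qed
  have t3: "(if d > 0 then 2 * coef n a (d - 1) else 0) = (fact n::real) * real d / D * 2 ^ d"
  proof (cases d)
    case 0 then show ?thesis by simp
  next
    case (Suc d')
    have h: "n - (a + d') = b" "a + d' \<le> n" using nb Suc by simp_all
    have fb: "(fact d::real) = real d * fact d'" using Suc by (simp add: fact_Suc)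
    have "coef n a d' = fact n/(fact a * fact d' * fact b) * 2^d'" by (simp add: coef_def h)
    moreover have "2 * (fact n/(fact a * fact d' * fact b) * 2^d') = fact n * real d / D * 2^d"
      unfolding D_def fb using Suc by (simp add: divide_simps)
    ultimately show ?thesis using Suc by (simp only: if_True zero_less_Suc diff_Suc_1)
  qed
  show ?thesis unfolding t0 t1 t2 t3 using Dpos by (simp add: field_simps)
qed

lemma UNIV_bool_pair: "(UNIV :: (bool \<times> bool) set) = {(True,True),(True,False),(False,True),(False,False)}"
  by auto

lemma coef_out: "a > n \<or> d > n \<Longrightarrow> coef n a d = 0"
  by (auto simp: coef_def)

lemma pair_sum:
  fixes \<Phi> :: "nat \<Rightarrow> nat \<Rightarrow> real"
  shows "(\<Sum>p\<in>{p. length p = n}. \<Phi> (c11 p) (cmx p)) = (\<Sum>a\<le>n. \<Sum>d\<le>n. coef n a d * \<Phi> a d)"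
proof (induction n arbitrary: \<Phi>)
  case 0
  then show ?case by (simp add: c11_def cmx_def coef_def)
next
  case (Suc n)
  have "(\<Sum>p\<in>{p. length p = Suc n}. \<Phi> (c11 p) (cmx p))
     = (\<Sum>p\<in>{p. length p = n}. \<Phi> (Suc (c11 p)) (cmx p))
       + 2 * (\<Sum>p\<in>{p. length p = n}. \<Phi> (c11 p) (Suc (cmx p)))
       + (\<Sum>p\<in>{p. length p = n}. \<Phi> (c11 p) (cmx p))"
    unfolding sum_lists_Suc UNIV_bool_pair
    by (simp add: c11_def cmx_def sum.distrib algebra_simps)
  also have "\<dots> = (\<Sum>a\<le>n. \<Sum>d\<le>n. coef n a d * \<Phi> (Suc a) d)
       + 2 * (\<Sum>a\<le>n. \<Sum>d\<le>n. coef n a d * \<Phi> a (Suc d))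
       + (\<Sum>a\<le>n. \<Sum>d\<le>n. coef n a d * \<Phi> a d)"
    using Suc.IH[of "\<lambda>a d. \<Phi> (Suc a) d"] Suc.IH[of "\<lambda>a d. \<Phi> a (Suc d)"] Suc.IH[of \<Phi>] by simp
  also have "\<dots> = (\<Sum>a\<le>Suc n. \<Sum>d\<le>Suc n. coef (Suc n) a d * \<Phi> a d)"
  proof -
    have e1: "(\<Sum>a\<le>Suc n. \<Sum>d\<le>Suc n. (if a > 0 then coef n (a - 1) d else 0) * \<Phi> a d)
       = (\<Sum>a\<le>n. \<Sum>d\<le>n. coef n a d * \<Phi> (Suc a) d)"
    proof -
      have "(\<Sum>d\<le>Suc n. (if a > 0 then coef n (a - 1) d else 0) * \<Phi> a d)
          = (\<Sum>d\<le>n. (if a > 0 then coef n (a - 1) d else 0) * \<Phi> a d)" for a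
        by (simp add: coef_out)
      then show ?thesis by (simp only: sum.atMost_Suc_shift) simp
    qed
    have e2: "(\<Sum>a\<le>Suc n. \<Sum>d\<le>Suc n. (if d > 0 then 2 * coef n a (d - 1) else 0) * \<Phi> a d)
       = 2 * (\<Sum>a\<le>n. \<Sum>d\<le>n. coef n a d * \<Phi> a (Suc d))"
    proof -
      have "(\<Sum>d\<le>Suc n. (if d > 0 then 2 * coef n a (d - 1) else 0) * \<Phi> a d)
          = 2 * (\<Sum>d\<le>n. coef n a d * \<Phi> a (Suc d))" for a
        by (simp only: sum.atMost_Suc_shift) (simp add: sum_distrib_left mult.assoc)
      then show ?thesis by (simp add: coef_out sum_distrib_left)
    qed
    have e3: "(\<Sum>a\<le>Suc n. \<Sum>d\<le>Suc n. coef n a d * \<Phi> a d)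
       = (\<Sum>a\<le>n. \<Sum>d\<le>n. coef n a d * \<Phi> a d)"
      by (simp add: coef_out)
    show ?thesis
      unfolding coef_pascal distrib_right sum.distrib e1 e2 e3 by simp
  qed
  finally show ?case .
qed

definition unpr :: "(bool \<times> bool) list \<Rightarrow> bool list" where
  "unpr p = map fst p @ rev (map snd p)"

definition pr :: "nat \<Rightarrow> bool list \<Rightarrow> (bool \<times> bool) list" where
  "pr n w = zip (take n w) (rev (drop n w))"

lemma length_unpr: "length (unpr p) = 2 * length p"
  by (simp add: unpr_def)

lemma ones_pairs: "length (filter id (map fst p)) + length (filter id (map snd p)) = 2 * c11 p + cmx p"
  by (induction p) (auto simp: c11_def cmx_def)

lemma ones_unpr: "length (filter id (unpr p)) = 2 * c11 p + cmx p"
  using ones_pairs[of p] by (simp add: unpr_def rev_filter[symmetric])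

lemma da_unpr: "da (length p) (unpr p) = cmx p"
proof -
  let ?n = "length p"
  have e: "{i \<in> {1..?n}. unpr p ! (i - 1) \<noteq> unpr p ! (2 * ?n - i)}
        = Suc ` {i. i < ?n \<and> fst (p ! i) \<noteq> snd (p ! i)}"
  proof -
    have h1: "unpr p ! (i - 1) = fst (p ! (i - 1))" if "i \<in> {1..?n}" for i
      using that by (auto simp: unpr_def nth_append)
    have h2: "unpr p ! (2 * ?n - i) = snd (p ! (i - 1))" if "i \<in> {1..?n}" for i
    proof -
      have "unpr p ! (2 * ?n - i) = rev (map snd p) ! (?n - i)"
        using that by (auto simp: unpr_def nth_append)
      also have "\<dots> = snd (p ! (i - 1))"
        using that by (auto simp: rev_nth)
      finally show ?thesis .
    qed
    note h = h1 h2
    show ?thesis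
    proof (intro set_eqI iffI)
      fix x assume x: "x \<in> {i \<in> {1..?n}. unpr p ! (i - 1) \<noteq> unpr p ! (2 * ?n - i)}"
      then have "x - 1 \<in> {i. i < ?n \<and> fst (p ! i) \<noteq> snd (p ! i)}" using h by auto
      moreover have "x = Suc (x - 1)" using x by auto
      ultimately show "x \<in> Suc ` {i. i < ?n \<and> fst (p ! i) \<noteq> snd (p ! i)}" by blast
    next
      fix x assume "x \<in> Suc ` {i. i < ?n \<and> fst (p ! i) \<noteq> snd (p ! i)}"
      then obtain i where i: "x = Suc i" "i < ?n" "fst (p ! i) \<noteq> snd (p ! i)" by auto
      then show "x \<in> {i \<in> {1..?n}. unpr p ! (i - 1) \<noteq> unpr p ! (2 * ?n - i)}" using h[of x] by auto
    qed
  qed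
  have "cmx p = card {i. i < ?n \<and> fst (p ! i) \<noteq> snd (p ! i)}"
    unfolding cmx_def length_filter_conv_card by (simp add: case_prod_beta)
  then show ?thesis unfolding da_def e by (simp add: card_image)
qed

lemma pr_unpr: "pr (length p) (unpr p) = p"
  by (simp add: pr_def unpr_def zip_map_fst_snd)

lemma unpr_pr: "length w = 2 * n \<Longrightarrow> unpr (pr n w) = w"
  by (simp add: pr_def unpr_def)

lemma length_pr: "length w = 2 * n \<Longrightarrow> length (pr n w) = n"
  by (simp add: pr_def)

lemma bij_unpr: "bij_betw unpr {p. length p = n} {w. length w = 2 * n}"
proof (rule bij_betw_byWitness[where f' = "pr n"])
  show "\<forall>a\<in>{p. length p = n}. pr n (unpr a) = a" using pr_unpr by auto
  show "\<forall>a'\<in>{w. length w = 2 * n}. unpr (pr n a') = a'" using unpr_pr by auto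
  show "unpr ` {p. length p = n} \<subseteq> {w. length w = 2 * n}" by (auto simp: length_unpr)
  show "pr n ` {w. length w = 2 * n} \<subseteq> {p. length p = n}" by (auto simp: length_pr)
qed

definition cN :: "nat \<Rightarrow> nat \<Rightarrow> real" where
  "cN n a = (if 2 * a \<le> n then coef n a (n - 2 * a) else 0)"

lemma key_sum:
  fixes F :: "nat \<Rightarrow> real"
  shows "(\<Sum>w\<in>G n. F (da n w)) = (\<Sum>a\<le>n. cN n a * F (n - 2 * a))"
proof -
  have G: "G n = {w \<in> {w. length w = 2 * n}. length (filter id w) = n}"
    by (auto simp: G_def)
  have "(\<Sum>w\<in>G n. F (da n w)) = (\<Sum>w\<in>{w. length w = 2 * n}. if length (filter id w) = n then F (da n w) else 0)"
    unfolding G by (rule sum.inter_filter[OF fin_lists])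
  also have "\<dots> = (\<Sum>p\<in>{p. length p = n}. if length (filter id (unpr p)) = n then F (da n (unpr p)) else 0)"
    using sum.reindex_bij_betw[OF bij_unpr, of "\<lambda>w. if length (filter id w) = n then F (da n w) else 0", symmetric]
    by simp
  also have "\<dots> = (\<Sum>p\<in>{p. length p = n}. (\<lambda>a d. if 2 * a + d = n then F d else 0) (c11 p) (cmx p))"
    by (intro sum.cong refl) (auto simp: ones_unpr da_unpr[symmetric])
  also have "\<dots> = (\<Sum>a\<le>n. \<Sum>d\<le>n. coef n a d * (if 2 * a + d = n then F d else 0))"
    by (rule pair_sum)
  also have "\<dots> = (\<Sum>a\<le>n. cN n a * F (n - 2 * a))"
  proof (intro sum.cong refl)
    fix a assume "a \<in> {..n}"
    show "(\<Sum>d\<le>n. coef n a d * (if 2 * a + d = n then F d else 0)) = cN n a * F (n - 2 * a)"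
    proof (cases "2 * a \<le> n")
      case True
      have "(\<Sum>d\<le>n. coef n a d * (if 2 * a + d = n then F d else 0))
          = (\<Sum>d\<le>n. if d = n - 2 * a then coef n a d * F d else 0)"
        using True by (intro sum.cong refl) auto
      also have "\<dots> = coef n a (n - 2 * a) * F (n - 2 * a)"
        by (subst sum.delta) auto
      finally show ?thesis using True by (simp add: cN_def)
    next
      case False
      then show ?thesis by (simp add: cN_def)
    qed
  qed
  finally show ?thesis .
qed

lemma count_ones:
  "(\<Sum>w\<in>{w::bool list. length w = m}. if length (filter id w) = k then 1 else 0 :: real) = real (m choose k)"
proof (induction m arbitrary: k)
  case 0
  then show ?case by (cases k) auto
next
  case (Suc m)
  show ?case
  proof (cases k)
    case 0
    then show ?thesis using Suc.IH[of 0] unfolding sum_lists_Suc by (simp add: UNIV_bool id_def)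
  next
    case (Suc k')
    then show ?thesis using Suc.IH[of k'] Suc.IH[of k] unfolding sum_lists_Suc
      by (simp add: UNIV_bool id_def)
  qed
qed

lemma card_G: "card (G n) = (2 * n) choose n"
proof -
  have G: "G n = {w \<in> {w. length w = 2 * n}. length (filter id w) = n}"
    by (auto simp: G_def)
  have "real (card (G n)) = (\<Sum>w\<in>G n. 1)" by simp
  also have "\<dots> = (\<Sum>w\<in>{w::bool list. length w = 2 * n}. if length (filter id w) = n then 1 else 0 :: real)"
    unfolding G by (rule sum.inter_filter[OF fin_lists])
  finally show ?thesis using count_ones by simp
qed



lemma G_fin: "finite (G n)"
  by (rule finite_subset[OF _ fin_lists[of "2*n"]]) (auto simp: G_def)

lemma G_ne: "G n \<noteq> {}"
proof -
  have "replicate n True @ replicate n False \<in> G n" by (simp add: G_def)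
  then show ?thesis by auto
qed

lemma expect_G:
  fixes F :: "nat \<Rightarrow> real"
  shows "measure_pmf.expectation (unifG n) (\<lambda>w. F (da n w)) = (\<Sum>a\<le>n. cN n a * F (n - 2 * a)) / real ((2 * n) choose n)"
  unfolding unifG_def integral_pmf_of_set[OF G_ne G_fin]
  by (simp add: key_sum card_G)

lemma cN_eq: "cN n a = (if 2 * a \<le> n then fact n / (fact a * fact a * fact (n - 2 * a)) * 2 ^ (n - 2 * a) else 0)"
proof (cases "2 * a \<le> n")
  case True
  then have "n - a - (n - 2 * a) = a" by simp
  then show ?thesis using True by (simp add: cN_def coef_def mult_ac)
qed (simp add: cN_def)

lemma cN_zero: "2 * a > n \<Longrightarrow> cN n a = 0"
  by (simp add: cN_def)

lemma cN_S1: "real (Suc m - 2 * a) * cN (Suc m) a = 2 * real (Suc m) * cN m a"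
proof (cases "2 * a \<le> m")
  case True
  define r where "r = m - 2 * a"
  have r: "Suc m - 2 * a = Suc r" using True r_def by simp
  have "real (Suc m - 2 * a) * cN (Suc m) a = real (Suc r) * (fact (Suc m) / (fact a * fact a * fact (Suc r)) * 2 ^ (Suc r))"
    using True by (simp add: cN_eq r)
  also have "\<dots> = 2 * real (Suc m) * (fact m / (fact a * fact a * fact r) * 2 ^ r)"
    by (simp add: fact_Suc field_simps del: of_nat_Suc)
  also have "\<dots> = 2 * real (Suc m) * cN m a"
    using True by (simp add: cN_eq r_def)
  finally show ?thesis .
next
  case False
  then have "Suc m - 2 * a = 0 \<or> 2 * a > Suc m" by auto
  then show ?thesis using False by (auto simp: cN_zero)
qed

lemma cN_sum_ext: "n \<le> k \<Longrightarrow> (\<Sum>a\<le>k. cN n a) = (\<Sum>a\<le>n. cN n a)"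
  by (rule sum.mono_neutral_right) (auto simp: cN_zero)

lemma cN_sum0: "(\<Sum>a\<le>n. cN n a) = real ((2 * n) choose n)"
proof -
  have "(\<Sum>w\<in>G n. (\<lambda>_. 1::real) (da n w)) = (\<Sum>a\<le>n. cN n a * 1)" by (rule key_sum)
  then show ?thesis by (simp add: card_G)
qed

lemma cN_sum1: "(\<Sum>a\<le>Suc m. real (Suc m - 2 * a) * cN (Suc m) a) = 2 * real (Suc m) * real ((2 * m) choose m)"
proof -
  have "(\<Sum>a\<le>Suc m. real (Suc m - 2 * a) * cN (Suc m) a) = 2 * real (Suc m) * (\<Sum>a\<le>Suc m. cN m a)"
    by (simp only: cN_S1 sum_distrib_left)
  also have "(\<Sum>a\<le>Suc m. cN m a) = (\<Sum>a\<le>m. cN m a)" by (rule cN_sum_ext) simp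
  finally show ?thesis by (simp add: cN_sum0)
qed

lemma cN_S2: "real (Suc (Suc m) - 2 * a) * (real (Suc (Suc m) - 2 * a) - 1) * cN (Suc (Suc m)) a
   = 4 * real (Suc (Suc m)) * real (Suc m) * cN m a"
proof -
  have A: "real (Suc (Suc m) - 2 * a) * cN (Suc (Suc m)) a = 2 * real (Suc (Suc m)) * cN (Suc m) a"
    by (rule cN_S1)
  have B: "(real (Suc (Suc m) - 2 * a) - 1) * cN (Suc m) a = real (Suc m - 2 * a) * cN (Suc m) a"
  proof (cases "2 * a \<le> Suc m")
    case True
    then have "real (Suc (Suc m) - 2 * a) = real (Suc m - 2 * a) + 1" by (simp add: Suc_diff_le)
    then show ?thesis by simp
  qed (simp add: cN_zero)
  have C: "real (Suc m - 2 * a) * cN (Suc m) a = 2 * real (Suc m) * cN m a" by (rule cN_S1)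
  have "real (Suc (Suc m) - 2 * a) * (real (Suc (Suc m) - 2 * a) - 1) * cN (Suc (Suc m)) a
      = (real (Suc (Suc m) - 2 * a) - 1) * (real (Suc (Suc m) - 2 * a) * cN (Suc (Suc m)) a)"
    by (simp only: mult_ac)
  also have "\<dots> = 2 * real (Suc (Suc m)) * ((real (Suc (Suc m) - 2 * a) - 1) * cN (Suc m) a)"
    unfolding A by (simp only: mult_ac)
  also have "\<dots> = 4 * real (Suc (Suc m)) * real (Suc m) * cN m a"
    unfolding B C by (simp add: algebra_simps)
  finally show ?thesis .
qed

lemma cN_sum2: "(\<Sum>a\<le>Suc (Suc m). real (Suc (Suc m) - 2 * a) * (real (Suc (Suc m) - 2 * a) - 1) * cN (Suc (Suc m)) a)
   = 4 * real (Suc (Suc m)) * real (Suc m) * real ((2 * m) choose m)"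
proof -
  have "(\<Sum>a\<le>Suc (Suc m). real (Suc (Suc m) - 2 * a) * (real (Suc (Suc m) - 2 * a) - 1) * cN (Suc (Suc m)) a)
     = 4 * real (Suc (Suc m)) * real (Suc m) * (\<Sum>a\<le>Suc (Suc m). cN m a)"
    by (simp only: cN_S2 sum_distrib_left)
  also have "(\<Sum>a\<le>Suc (Suc m). cN m a) = (\<Sum>a\<le>m. cN m a)" by (rule cN_sum_ext) simp
  finally show ?thesis by (simp add: cN_sum0)
qed

lemma binom_step: "real ((2 * Suc m) choose Suc m) = real ((2 * m) choose m) * (2 * (2 * real m + 1) / (real m + 1))"
proof -
  have h1: "Suc m * (Suc (Suc (2*m)) choose Suc m) = Suc (Suc (2*m)) * (Suc (2*m) choose m)"
    by (rule Suc_times_binomial)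
  have h2: "Suc m * (Suc (m + m) choose Suc m) = Suc m * (Suc (m + m) choose m)"
    by (rule Suc_times_binomial_add)
  have h3: "Suc m * (Suc (2*m) choose Suc m) = Suc (2*m) * ((2*m) choose m)"
    by (rule Suc_times_binomial)
  have h2': "(Suc (2*m) choose Suc m) = (Suc (2*m) choose m)" using h2 mult_2[of m] by (metis mult_cancel1 nat.distinct(1))
  have e: "2 * Suc m = Suc (Suc (2*m))" by simp
  have "real (Suc m) * real ((2 * Suc m) choose Suc m) = real (Suc (Suc (2*m))) * real (Suc (2*m) choose m)"
    unfolding e using arg_cong[OF h1, of real] by (metis of_nat_mult)
  moreover have "real (Suc m) * real (Suc (2*m) choose m) = real (Suc (2*m)) * real ((2*m) choose m)"
    using arg_cong[OF h3, of real] h2' by (metis of_nat_mult)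
  ultimately show ?thesis by (simp add: field_simps del: binomial_Suc_Suc)
qed

lemma binom_pos: "real ((2 * n) choose n) > 0" by simp

definition S0 :: "nat \<Rightarrow> real" where "S0 n = (\<Sum>a\<le>n. cN n a)"
definition S1 :: "nat \<Rightarrow> real" where "S1 n = (\<Sum>a\<le>n. cN n a * real (n - 2 * a))"
definition S2 :: "nat \<Rightarrow> real" where
  "S2 n = (\<Sum>a\<le>n. cN n a * (real (n - 2 * a) * (real (n - 2 * a) - 1)))"

lemma S0_pos: "S0 n > 0" by (simp add: S0_def cN_sum0)

lemma R1: "n \<ge> 1 \<Longrightarrow> S1 n / S0 n = real n ^ 2 / (2 * real n - 1)"
proof -
  assume "n \<ge> 1"
  then obtain m where n: "n = Suc m" by (cases n) auto
  define c where "c = real ((2 * m) choose m)"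
  have c: "c > 0" by (simp add: c_def)
  have A: "S1 n = 2 * (real m + 1) * c"
    unfolding S1_def n c_def using cN_sum1[of m] by (simp add: mult.commute)
  have B: "S0 n = c * (2 * (2 * real m + 1) / (real m + 1))"
    unfolding S0_def n cN_sum0 c_def by (rule binom_step)
  have "S1 n / S0 n = (real m + 1)^2 / (2 * real m + 1)"
  proof -
    have p: "2 * real m + 1 \<noteq> 0" "real m + 1 \<noteq> 0" "c \<noteq> 0" using c by auto
    have "S1 n * (2 * real m + 1) = (real m + 1)^2 * S0 n"
      unfolding A B using p by (simp add: field_simps power2_eq_square)
    then show ?thesis using S0_pos[of n] p by (simp add: field_simps)
  qed
  then show ?thesis unfolding n by (simp add: algebra_simps)
qed

lemma R2: "n \<ge> 2 \<Longrightarrow> S2 n / S0 n = real n ^ 2 * (real n - 1) ^ 2 / ((2 * real n - 1) * (2 * real n - 3))"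
proof -
  assume "n \<ge> 2"
  then obtain m where n: "n = Suc (Suc m)" by (metis add_2_eq_Suc le_Suc_ex)
  define c where "c = real ((2 * m) choose m)"
  have c: "c > 0" by (simp add: c_def)
  have A: "S2 n = 4 * (real m + 2) * (real m + 1) * c"
    unfolding S2_def n c_def using cN_sum2[of m] by (simp add: algebra_simps)
  have B: "S0 n = c * (2 * (2 * real m + 1) / (real m + 1)) * (2 * (2 * real m + 3) / (real m + 2))"
    unfolding S0_def n cN_sum0 binom_step c_def by (simp add: algebra_simps)
  have "S2 n / S0 n = (real m + 2)^2 * (real m + 1)^2 / ((2 * real m + 3) * (2 * real m + 1))"
  proof -
    have p: "2 * real m + 1 \<noteq> 0" "real m + 1 \<noteq> 0" "2 * real m + 3 \<noteq> 0" "real m + 2 \<noteq> 0"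
      "2 + (real m * real m + real m * 3) \<noteq> 0" "3 + (real m * 8 + real m * (real m * 4)) \<noteq> 0" "c \<noteq> 0" using c
      by (auto simp: add_nonneg_eq_0_iff)
    have "S2 n * ((2 * real m + 3) * (2 * real m + 1)) = (real m + 2)^2 * (real m + 1)^2 * S0 n"
      unfolding A B using p by (simp add: field_simps power2_eq_square)
    then show ?thesis using S0_pos[of n] p by (simp add: field_simps)
  qed
  then show ?thesis unfolding n by (simp add: algebra_simps)
qed

lemma meanX_S: "meanX n = S1 n / S0 n"
  unfolding meanX_def using expect_G[where F=real and n=n] by (simp add: S1_def S0_def cN_sum0)

lemma meanX_eq: "n \<ge> 1 \<Longrightarrow> meanX n = real n ^ 2 / (2 * real n - 1)"
  by (simp add: meanX_S R1)

lemma varX_S: "varX n = (S2 n + S1 n) / S0 n - (S1 n / S0 n)^2"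
proof -
  define \<mu> where "\<mu> = meanX n"
  have "varX n = measure_pmf.expectation (unifG n) (\<lambda>w. (\<lambda>k. (real k - \<mu>)^2) (da n w))"
    unfolding varX_def \<mu>_def meanX_def by simp
  also have "\<dots> = (\<Sum>a\<le>n. cN n a * (real (n - 2 * a) - \<mu>)^2) / S0 n"
    using expect_G[where F="\<lambda>k. (real k - \<mu>)^2" and n=n] by (simp add: S0_def cN_sum0)
  also have "(\<Sum>a\<le>n. cN n a * (real (n - 2 * a) - \<mu>)^2)
     = S2 n + S1 n - 2 * \<mu> * S1 n + \<mu>^2 * S0 n"
    unfolding S0_def S1_def S2_def
    by (simp add: power2_eq_square algebra_simps sum.distrib sum_subtractf sum_distrib_left)
  finally have "varX n = (S2 n + S1 n - 2 * \<mu> * S1 n + \<mu>^2 * S0 n) / S0 n" .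
  also have "\<dots> = (S2 n + S1 n) / S0 n - 2 * \<mu> * (S1 n / S0 n) + \<mu>^2"
    using S0_pos[of n] by (simp add: field_simps)
  finally show ?thesis unfolding \<mu>_def meanX_S by (simp add: power2_eq_square)
qed

lemma varX_eq: "n \<ge> 2 \<Longrightarrow> varX n = real n ^ 2 * (real n - 1) ^ 2 / ((2 * real n - 1) * (2 * real n - 3))
   + real n ^ 2 / (2 * real n - 1) - (real n ^ 2 / (2 * real n - 1))^2"
proof -
  assume n: "n \<ge> 2"
  have "varX n = S2 n / S0 n + S1 n / S0 n - (S1 n / S0 n)^2"
    by (simp add: varX_S add_divide_distrib)
  then show ?thesis using R1[of n] R2[of n] n by simp
qed



lemma mean_bound: "n \<ge> 1 \<Longrightarrow> \<bar>meanX n - real n / 2\<bar> \<le> 1"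
proof -
  assume n: "n \<ge> 1"
  then have x: "real n \<ge> 1" by simp
  have "meanX n - real n / 2 = real n / (2 * (2 * real n - 1))"
    using x by (simp add: meanX_eq field_simps power2_eq_square)
  moreover have "real n / (2 * (2 * real n - 1)) \<le> 1" using x by (simp add: field_simps)
  moreover have "real n / (2 * (2 * real n - 1)) \<ge> 0" using x by simp
  ultimately show ?thesis by (metis abs_of_nonneg)
qed

lemma var_alg:
  fixes x a b :: real
  assumes a: "a \<noteq> 0" "a = 2 * x - 1" and b: "b \<noteq> 0" "b = 2 * x - 3"
  shows "x^2 * (x - 1)^2 / (a * b) + x^2 / a - (x^2 / a)^2 - x / 4 = x * (4 * x^2 - 6 * x + 3) / (4 * a^2 * b)"
  using a(1) b(1) apply (simp add: field_simps power2_eq_square)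
  unfolding a(2) b(2) apply (simp add: algebra_simps)
  done

lemma var_bound: "n \<ge> 2 \<Longrightarrow> \<bar>varX n - real n / 4\<bar> \<le> 1"
proof -
  assume n: "n \<ge> 2"
  define x where "x = real n"
  have x: "x \<ge> 2" using n by (simp add: x_def)
  have nz: "2 * x - 1 \<noteq> 0" "2 * x - 3 \<noteq> 0" using x by auto
  have "varX n - real n / 4 = x * (4 * x^2 - 6 * x + 3) / (4 * (2 * x - 1)^2 * (2 * x - 3))"
    unfolding varX_eq[OF n] x_def[symmetric] using var_alg[OF nz(1) refl nz(2) refl] by simp
  moreover have "x * (4 * x^2 - 6 * x + 3) \<ge> 0"
  proof -
    have "4 * x^2 - 6 * x + 3 \<ge> 0" using x by (simp add: power2_eq_square)
    then show ?thesis using x by simp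
  qed
  moreover have "x * (4 * x^2 - 6 * x + 3) \<le> 4 * (2 * x - 1)^2 * (2 * x - 3)"
  proof -
    have "4 * (2 * x - 1)^2 * (2 * x - 3) - x * (4 * x^2 - 6 * x + 3) = 28*x^3 - 74*x^2 + 53*x - 12"
      by (simp add: power2_eq_square power3_eq_cube algebra_simps)
    also have "\<dots> = (x - 2) * (28 * x^2 - 18 * x + 17) + 22"
      by (simp add: power2_eq_square power3_eq_cube algebra_simps)
    also have "\<dots> \<ge> 0"
    proof -
      have "28 * x^2 - 18 * x + 17 \<ge> 0" using x by (simp add: power2_eq_square)
      then show ?thesis using x by simp
    qed
    finally show ?thesis by simp
  qed
  moreover have "4 * (2 * x - 1)^2 * (2 * x - 3) > 0" using x by simp
  ultimately show ?thesis by (simp add: divide_le_eq)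
qed

lemma mean_O: "(\<lambda>n. meanX n - real n / 2) \<in> O(\<lambda>_. 1)"
  by (intro bigoI[where c=1] eventually_at_top_linorderI[of 1]) (use mean_bound in auto)

lemma var_O: "(\<lambda>n. varX n - real n / 4) \<in> O(\<lambda>_. 1)"
  by (intro bigoI[where c=1] eventually_at_top_linorderI[of 2]) (use var_bound in auto)



lemma rd_pmf: "real_distribution (distr (measure_pmf p) borel (f :: 'a \<Rightarrow> real))"
  using prob_space.real_distribution_distr[OF prob_space_measure_pmf] by simp

lemma cos_approx: "cmod ((iexp u + iexp (- u)) / 2 - complex_of_real (1 - u^2 / 2)) \<le> u^4 / 24"
proof -
  have a: "cmod (iexp u - (\<Sum>k \<le> 3. (\<i> * u)^k / fact k)) \<le> \<bar>u\<bar>^4 / 24"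
    using iexp_approx1[of u 3] by (simp add: numeral_eq_Suc fact_Suc)
  have b: "cmod (iexp (-u) - (\<Sum>k \<le> 3. (\<i> * (-u))^k / fact k)) \<le> \<bar>u\<bar>^4 / 24"
    using iexp_approx1[of "-u" 3] by (simp add: numeral_eq_Suc fact_Suc)
  have s: "(\<Sum>k \<le> 3. (\<i> * u)^k / fact k) + (\<Sum>k \<le> 3. (\<i> * (-u))^k / fact k) = 2 * complex_of_real (1 - u^2 / 2)"
    by (simp add: numeral_eq_Suc fact_Suc power2_eq_square field_simps)
  have "(iexp u + iexp (- u)) / 2 - complex_of_real (1 - u^2 / 2)
      = ((iexp u - (\<Sum>k \<le> 3. (\<i> * u)^k / fact k)) + (iexp (-u) - (\<Sum>k \<le> 3. (\<i> * (-u))^k / fact k))) / 2"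
  proof -
    define SA where "SA = (\<Sum>k \<le> 3. (\<i> * u)^k / fact k)"
    define SB where "SB = (\<Sum>k \<le> 3. (\<i> * (-u))^k / fact k)"
    define c where "c = complex_of_real (1 - u^2 / 2)"
    have s': "SA + SB = 2 * c" using s unfolding SA_def SB_def c_def .
    have "((iexp u - SA) + (iexp (-u) - SB)) / 2 = (iexp u + iexp (-u) - (SA + SB)) / 2"
      by (simp add: algebra_simps)
    also have "\<dots> = (iexp u + iexp (-u)) / 2 - c" unfolding s' by (simp add: field_simps)
    finally show ?thesis unfolding SA_def SB_def c_def by simp
  qed
  also have "cmod \<dots> \<le> (\<bar>u\<bar>^4 / 24 + \<bar>u\<bar>^4 / 24) / 2"
    using norm_triangle_le[OF add_mono[OF a b]] by (simp add: norm_divide)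
  finally show ?thesis by (simp add: power_abs)
qed

lemma char_binom:
  "char (distr (measure_pmf (binomial_pmf n (1/2))) borel (\<lambda>k. (2 * real k - real n) / sqrt (real n))) t
   = ((iexp (t / sqrt (real n)) + iexp (- (t / sqrt (real n)))) / 2) ^ n"
proof -
  define u where "u = t / sqrt (real n)"
  have "char (distr (measure_pmf (binomial_pmf n (1/2))) borel (\<lambda>k. (2 * real k - real n) / sqrt (real n))) t
      = (\<Sum>k\<le>n. pmf (binomial_pmf n (1/2)) k *\<^sub>R iexp (t * ((2 * real k - real n) / sqrt (real n))))"
    unfolding char_def
  proof (subst integral_distr)
    show "(\<integral>x. iexp (t * ((2 * real x - real n) / sqrt (real n))) \<partial>measure_pmf (binomial_pmf n (1 / 2)))
       = (\<Sum>k\<le>n. pmf (binomial_pmf n (1/2)) k *\<^sub>R iexp (t * ((2 * real k - real n) / sqrt (real n))))"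
      by (rule integral_measure_pmf) auto
  qed auto
  also have "\<dots> = (\<Sum>k\<le>n. of_nat (n choose k) * iexp u ^ k * iexp (-u) ^ (n - k) / 2 ^ n)"
  proof (intro sum.cong refl)
    fix k assume k: "k \<in> {..n}"
    have e0: "t * ((2 * real k - real n) / sqrt (real n)) = real k * u + real (n - k) * (-u)"
    proof (cases "n = 0")
      case True then show ?thesis using k by (simp add: u_def)
    next
      case False
      then have "sqrt (real n) > 0" by simp
      then show ?thesis using k by (simp add: u_def of_nat_diff field_simps)
    qed
    have e: "complex_of_real (t * ((2 * real k - real n) / sqrt (real n))) = of_nat k * of_real u + of_nat (n - k) * of_real (-u)"
      unfolding e0 by simp
    have "iexp (t * ((2 * real k - real n) / sqrt (real n))) = iexp u ^ k * iexp (-u) ^ (n - k)"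
    proof -
      have "\<i> * (of_nat k * of_real u + of_nat (n - k) * of_real (-u)) = of_nat k * (\<i> * of_real u) + of_nat (n-k) * (\<i> * of_real (-u))"
        by (simp add: algebra_simps)
      then show ?thesis unfolding e by (simp only: exp_add exp_of_nat_mult)
    qed
    then show "pmf (binomial_pmf n (1/2)) k *\<^sub>R iexp (t * ((2 * real k - real n) / sqrt (real n)))
        = of_nat (n choose k) * iexp u ^ k * iexp (-u) ^ (n - k) / 2 ^ n"
      using k by (simp add: scaleR_conv_of_real power_divide field_simps power_add[symmetric])
  qed
  also have "\<dots> = (iexp u + iexp (-u)) ^ n / 2 ^ n"
    unfolding binomial_ring by (simp add: sum_divide_distrib)
  also have "\<dots> = ((iexp u + iexp (-u)) / 2) ^ n" by (simp add: power_divide)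
  finally show ?thesis unfolding u_def .
qed

lemma binom_clt:
  "weak_conv_m (\<lambda>n. distr (measure_pmf (binomial_pmf n (1/2))) borel (\<lambda>k. (2 * real k - real n) / sqrt (real n)))
     std_normal_distribution"
proof (rule levy_continuity[OF rd_pmf real_dist_normal_dist])
  fix t :: real
  define c where "c n = (iexp (t / sqrt (real n)) + iexp (- (t / sqrt (real n)))) / 2" for n :: nat
  define b where "b n = complex_of_real (1 + (- (t^2) / 2) / real n)" for n :: nat
  have lim_b: "(\<lambda>n. b n ^ n) \<longlonglongrightarrow> complex_of_real (exp (- (t^2) / 2))"
    unfolding b_def of_real_power[symmetric] by (intro tendsto_of_real tendsto_exp_limit_sequentially)
  have bc: "cmod (c n - b n) \<le> t^4 / (24 * real n^2)" if n: "n > 0" for n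
  proof -
    have "b n = complex_of_real (1 - (t / sqrt (real n))^2 / 2)"
      using n by (simp add: b_def power_divide)
    then have "cmod (c n - b n) \<le> (t / sqrt (real n))^4 / 24"
      unfolding c_def using cos_approx[of "t / sqrt (real n)"] by simp
    also have "(t / sqrt (real n))^4 = t^4 / real n^2"
      using n by (simp add: power_divide numeral_eq_Suc power_Suc)
    finally show ?thesis by simp
  qed
  have ev: "eventually (\<lambda>n. norm (c n ^ n - b n ^ n) \<le> t^4 / (24 * real n)) sequentially"
  proof -
    obtain N :: nat where N: "t^2 / 4 < N" using reals_Archimedean2 by blast
    show ?thesis
    proof (rule eventually_sequentiallyI[of "Suc N"])
      fix n assume "Suc N \<le> n"
      then have n: "n > 0" "real n > t^2 / 4" using N by auto
      have c1: "norm (c n) \<le> 1"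
      proof -
        have "norm (iexp (t / sqrt (real n)) + iexp (- (t / sqrt (real n)))) \<le> 2"
          using norm_triangle_ineq[of "iexp (t / sqrt (real n))" "iexp (- (t / sqrt (real n)))"]
          by (simp add: norm_exp_i_times)
        then show ?thesis by (simp add: c_def norm_divide)
      qed
      have b1: "norm (b n) \<le> 1"
      proof -
        have "0 \<le> t^2 / real n" "t^2 / real n \<le> 4" using n by (auto simp: field_simps)
        then show ?thesis unfolding b_def norm_of_real by (simp add: abs_le_iff field_simps)
      qed
      have "norm (c n ^ n - b n ^ n) \<le> real n * norm (c n - b n)"
        by (rule norm_power_diff[OF c1 b1])
      also have "\<dots> \<le> real n * (t^4 / (24 * real n^2))"
        using bc[OF n(1)] by (intro mult_left_mono) auto
      also have "\<dots> = t^4 / (24 * real n)" using n by (simp add: power2_eq_square field_simps)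
      finally show "norm (c n ^ n - b n ^ n) \<le> t^4 / (24 * real n)" .
    qed
  qed
  have "(\<lambda>n. t^4 / (24 * real n)) \<longlonglongrightarrow> 0"
    by (intro tendsto_divide_0[OF tendsto_const] filterlim_at_top_imp_at_infinity filterlim_tendsto_pos_mult_at_top[OF tendsto_const]
        filterlim_real_sequentially) simp
  then have "(\<lambda>n. c n ^ n - b n ^ n) \<longlonglongrightarrow> 0"
    by (rule Lim_null_comparison[OF ev])
  then have "(\<lambda>n. c n ^ n) \<longlonglongrightarrow> complex_of_real (exp (- (t^2) / 2))"
    by (rule Lim_transform[OF lim_b])
  then show "(\<lambda>n. char (distr (measure_pmf (binomial_pmf n (1/2))) borel (\<lambda>k. (2 * real k - real n) / sqrt (real n))) t)
      \<longlonglongrightarrow> char std_normal_distribution t"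
    unfolding char_binom char_std_normal_distribution c_def by simp
qed



definition rnd :: "nat \<Rightarrow> nat \<Rightarrow> nat" where
  "rnd n k = (if even (n - k) then k else Suc k)"

lemma split_atMost_parity:
  fixes h :: "nat \<Rightarrow> real"
  shows "(\<Sum>k\<le>n. h k) = (\<Sum>j\<in>{j. 2 * j \<le> n}. h (n - 2 * j)) + (\<Sum>j\<in>{j. 2 * j + 1 \<le> n}. h (n - 2 * j - 1))"
proof -
  define A where "A = (\<lambda>j. n - 2 * j) ` {j. 2 * j \<le> n}"
  define B where "B = (\<lambda>j. n - 2 * j - 1) ` {j. 2 * j + 1 \<le> n}"
  have finA: "finite {j. 2 * j \<le> n}" by (rule finite_subset[of _ "{..n}"]) auto
  have finB: "finite {j. 2 * j + 1 \<le> n}" by (rule finite_subset[of _ "{..n}"]) auto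
  have injA: "inj_on (\<lambda>j. n - 2 * j) {j. 2 * j \<le> n}" by (auto simp: inj_on_def)
  have injB: "inj_on (\<lambda>j. n - 2 * j - 1) {j. 2 * j + 1 \<le> n}" by (auto simp: inj_on_def)
  have U: "{..n} = A \<union> B"
  proof (intro equalityI subsetI)
    fix k assume k: "k \<in> {..n}"
    show "k \<in> A \<union> B"
    proof (cases "even (n - k)")
      case True
      then obtain j where j: "n - k = 2 * j" by (metis dvdE)
      then have "k = n - 2 * j" "2 * j \<le> n" using k by auto
      then show ?thesis unfolding A_def by blast
    next
      case False
      then obtain j where j: "n - k = 2 * j + 1" by (metis oddE)
      then have "k = n - 2 * j - 1" "2 * j + 1 \<le> n" using k by auto
      then show ?thesis unfolding B_def by blast
    qed
  qed (auto simp: A_def B_def)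
  have D: "A \<inter> B = {}"
  proof (rule ccontr)
    assume "A \<inter> B \<noteq> {}"
    then obtain j j' where "2 * j \<le> n" "2 * j' + 1 \<le> n" "n - 2 * j = n - 2 * j' - 1"
      unfolding A_def B_def by blast
    then have "2 * j = 2 * j' + 1" by simp
    then show False by presburger
  qed
  have "(\<Sum>k\<le>n. h k) = sum h A + sum h B"
    unfolding U by (rule sum.union_disjoint) (use D finA finB in \<open>auto simp: A_def B_def\<close>)
  also have "sum h A = (\<Sum>j\<in>{j. 2 * j \<le> n}. h (n - 2 * j))"
    unfolding A_def by (subst sum.reindex[OF injA]) simp
  also have "sum h B = (\<Sum>j\<in>{j. 2 * j + 1 \<le> n}. h (n - 2 * j - 1))"
    unfolding B_def by (subst sum.reindex[OF injB]) simp
  finally show ?thesis .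
qed

lemma round_sum:
  fixes G :: "nat \<Rightarrow> real"
  shows "(\<Sum>k\<le>n. real (n choose k) * G (rnd n k)) = (\<Sum>j\<le>n. real (Suc n choose (2 * j + 1)) * G (n - 2 * j))"
proof -
  have "(\<Sum>k\<le>n. real (n choose k) * G (rnd n k))
      = (\<Sum>j\<in>{j. 2 * j \<le> n}. real (n choose (n - 2 * j)) * G (rnd n (n - 2 * j)))
        + (\<Sum>j\<in>{j. 2 * j + 1 \<le> n}. real (n choose (n - 2 * j - 1)) * G (rnd n (n - 2 * j - 1)))"
    by (rule split_atMost_parity)
  also have "(\<Sum>j\<in>{j. 2 * j \<le> n}. real (n choose (n - 2 * j)) * G (rnd n (n - 2 * j)))
      = (\<Sum>j\<le>n. real (n choose (2 * j)) * G (n - 2 * j))"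
  proof (rule sum.mono_neutral_cong_left)
    show "\<forall>i\<in>{..n} - {j. 2 * j \<le> n}. real (n choose (2 * i)) * G (n - 2 * i) = 0" by auto
    show "\<And>x. x \<in> {j. 2 * j \<le> n} \<Longrightarrow> real (n choose (n - 2 * x)) * G (rnd n (n - 2 * x)) = real (n choose (2 * x)) * G (n - 2 * x)"
      by (auto simp: rnd_def binomial_symmetric[symmetric])
  qed auto
  also have "(\<Sum>j\<in>{j. 2 * j + 1 \<le> n}. real (n choose (n - 2 * j - 1)) * G (rnd n (n - 2 * j - 1)))
      = (\<Sum>j\<le>n. real (n choose (2 * j + 1)) * G (n - 2 * j))"
  proof (rule sum.mono_neutral_cong_left)
    show "\<forall>i\<in>{..n} - {j. 2 * j + 1 \<le> n}. real (n choose (2 * i + 1)) * G (n - 2 * i) = 0" by auto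
    fix x assume x: "x \<in> {j. 2 * j + 1 \<le> n}"
    then have "n - (n - 2 * x - 1) = 2 * x + 1" "Suc (n - 2 * x - 1) = n - 2 * x" by auto
    moreover have "n choose (n - 2 * x - 1) = n choose (2 * x + 1)"
      using x binomial_symmetric[of "2 * x + 1" n] by (simp add: diff_diff_add)
    ultimately show "real (n choose (n - 2 * x - 1)) * G (rnd n (n - 2 * x - 1)) = real (n choose (2 * x + 1)) * G (n - 2 * x)"
      by (simp add: rnd_def)
  qed auto
  also have "(\<Sum>j\<le>n. real (n choose (2 * j)) * G (n - 2 * j)) + (\<Sum>j\<le>n. real (n choose (2 * j + 1)) * G (n - 2 * j))
      = (\<Sum>j\<le>n. real (Suc n choose (2 * j + 1)) * G (n - 2 * j))"
    by (simp add: sum.distrib[symmetric] algebra_simps)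
  finally show ?thesis .
qed

lemma pascal_sum:
  fixes f :: "nat \<Rightarrow> real"
  shows "(\<Sum>k\<le>Suc n. real (Suc n choose k) * f k) = (\<Sum>k\<le>n. real (n choose k) * (f k + f (Suc k)))"
proof -
  have "(\<Sum>k\<le>Suc n. real (Suc n choose k) * f k) = f 0 + (\<Sum>k\<le>n. real (Suc n choose Suc k) * f (Suc k))"
    by (subst sum.atMost_Suc_shift) simp
  also have "\<dots> = f 0 + (\<Sum>k\<le>n. real (n choose Suc k) * f (Suc k)) + (\<Sum>k\<le>n. real (n choose k) * f (Suc k))"
    by (simp add: sum.distrib algebra_simps)
  also have "f 0 + (\<Sum>k\<le>n. real (n choose Suc k) * f (Suc k)) = (\<Sum>k\<le>Suc n. real (n choose k) * f k)"
    by (subst sum.atMost_Suc_shift[of _ n]) simp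
  also have "\<dots> = (\<Sum>k\<le>n. real (n choose k) * f k)" by simp
  finally show ?thesis by (simp add: sum.distrib algebra_simps)
qed

lemma binom_row_real: "(\<Sum>k\<le>n. real (n choose k)) = 2 ^ n"
  using choose_row_sum[of n] by (metis of_nat_numeral of_nat_power of_nat_sum)

lemma binom_2mom: "(\<Sum>k\<le>n. real (n choose k) * (2 * real k - real n)^2) = real n * 2 ^ n"
proof (induction n)
  case 0 then show ?case by simp
next
  case (Suc n)
  have "(\<Sum>k\<le>Suc n. real (Suc n choose k) * (2 * real k - real (Suc n))^2)
      = (\<Sum>k\<le>n. real (n choose k) * ((2 * real k - real (Suc n))^2 + (2 * real (Suc k) - real (Suc n))^2))"
    by (rule pascal_sum)
  also have "\<dots> = (\<Sum>k\<le>n. 2 * (real (n choose k) * (2 * real k - real n)^2) + 2 * real (n choose k))"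
    by (intro sum.cong refl) (simp add: power2_eq_square algebra_simps)
  also have "\<dots> = 2 * (real n * 2 ^ n) + 2 * 2 ^ n"
    by (simp add: sum.distrib sum_distrib_left[symmetric] Suc.IH binom_row_real)
  finally show ?case by (simp add: algebra_simps)
qed

definition qq :: "nat \<Rightarrow> nat \<Rightarrow> real" where
  "qq n j = real (Suc n choose (2 * j + 1)) / 2 ^ n"

lemma qq_nonneg: "qq n j \<ge> 0" by (simp add: qq_def)

lemma qq_sum: "(\<Sum>j\<le>n. qq n j) = 1"
proof -
  have "(\<Sum>j\<le>n. real (Suc n choose (2 * j + 1)) * (\<lambda>_. 1) (n - 2 * j)) = (\<Sum>k\<le>n. real (n choose k) * (\<lambda>_. 1) (rnd n k))"
    by (rule round_sum[symmetric])
  then show ?thesis by (simp add: qq_def sum_divide_distrib[symmetric] binom_row_real)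
qed

lemma qq_expect:
  fixes Gf :: "nat \<Rightarrow> real"
  shows "(\<Sum>j\<le>n. qq n j * Gf (n - 2 * j)) = (\<Sum>k\<le>n. real (n choose k) / 2 ^ n * Gf (rnd n k))"
  using round_sum[of n Gf] by (simp add: qq_def sum_divide_distrib[symmetric])

lemma rnd_close: "k \<le> n \<Longrightarrow> \<bar>real (rnd n k) - real k\<bar> \<le> 1"
  by (simp add: rnd_def)

lemma qq_tail:
  assumes D: "D > 1"
  shows "(\<Sum>j\<le>n. qq n j * (if \<bar>real (n - 2 * j) - real n / 2\<bar> > D then 1 else 0)) \<le> real n / (4 * (D - 1)^2)"
proof -
  have "(\<Sum>j\<le>n. qq n j * (if \<bar>real (n - 2 * j) - real n / 2\<bar> > D then 1 else 0))
      = (\<Sum>k\<le>n. real (n choose k) / 2 ^ n * (if \<bar>real (rnd n k) - real n / 2\<bar> > D then 1 else 0))"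
    using qq_expect[of n "\<lambda>m. if \<bar>real m - real n / 2\<bar> > D then 1 else 0"] by simp
  also have "\<dots> \<le> (\<Sum>k\<le>n. real (n choose k) / 2 ^ n * ((2 * real k - real n)^2 / (4 * (D - 1)^2)))"
  proof (intro sum_mono mult_left_mono)
    fix k assume k: "k \<in> {..n}"
    show "(if \<bar>real (rnd n k) - real n / 2\<bar> > D then 1 else 0) \<le> (2 * real k - real n)^2 / (4 * (D - 1)^2)"
    proof (cases "\<bar>real (rnd n k) - real n / 2\<bar> > D")
      case True
      have "\<bar>real k - real n / 2\<bar> \<ge> D - 1" using True rnd_close[of k n] k by auto
      then have "(D - 1)^2 \<le> (real k - real n / 2)^2"
        using D by (metis abs_ge_zero abs_of_pos diff_gt_0_iff_gt power2_abs power_mono)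
      then have "1 \<le> (real k - real n / 2)^2 / (D - 1)^2" using D by simp
      also have "(real k - real n / 2)^2 = (2 * real k - real n)^2 / 4" by (simp add: power2_eq_square field_simps)
      finally show ?thesis using True by (simp add: field_simps)
    qed simp
  qed simp
  also have "\<dots> = (\<Sum>k\<le>n. real (n choose k) * (2 * real k - real n)^2) / (2 ^ n * (4 * (D - 1)^2))"
    by (simp add: sum_divide_distrib[symmetric] sum_distrib_left[symmetric] field_simps)
  also have "\<dots> = real n / (4 * (D - 1)^2)" unfolding binom_2mom by simp
  finally show ?thesis .
qed



lemma tv_abstract:
  fixes p q h :: "nat \<Rightarrow> real"
  assumes fin: "finite I" and JI: "J \<subseteq> I"
    and p0: "\<And>i. i \<in> I \<Longrightarrow> p i \<ge> 0" and q0: "\<And>i. i \<in> I \<Longrightarrow> q i \<ge> 0"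
    and ps: "sum p I = 1" and qs: "sum q I = 1"
    and c: "c > 0" and pj: "\<And>j. j \<in> J \<Longrightarrow> p j = c * h j * q j"
    and h0: "\<And>j. j \<in> J \<Longrightarrow> h j \<ge> 0"
    and hR: "\<And>j j'. j \<in> J \<Longrightarrow> j' \<in> J \<Longrightarrow> h j \<le> R * h j'" and R: "R \<ge> 1"
  shows "(\<Sum>i\<in>I. \<bar>p i - q i\<bar>) \<le> 2 * (R - 1) + 2 * sum p (I - J) + 2 * sum q (I - J)"
proof -
  have finJ: "finite J" using fin JI finite_subset by blast
  define P where "P = sum p J"
  define Q where "Q = sum q J"
  have splitp: "sum p I = P + sum p (I - J)" unfolding P_def
    using sum.subset_diff[OF JI fin, of p] by simp
  have splitq: "sum q I = Q + sum q (I - J)" unfolding Q_def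
    using sum.subset_diff[OF JI fin, of q] by simp
  have pJ0: "p j \<ge> 0" if "j \<in> J" for j using p0 JI that by auto
  have qJ0: "q j \<ge> 0" if "j \<in> J" for j using q0 JI that by auto
  have P0: "P \<ge> 0" unfolding P_def using pJ0 by (intro sum_nonneg) auto
  have Q0: "Q \<ge> 0" unfolding Q_def using qJ0 by (intro sum_nonneg) auto
  have ep0: "sum p (I - J) \<ge> 0" using p0 by (intro sum_nonneg) auto
  have eq0: "sum q (I - J) \<ge> 0" using q0 by (intro sum_nonneg) auto
  have P1: "P = 1 - sum p (I - J)" using splitp ps by simp
  have Q1: "Q = 1 - sum q (I - J)" using splitq qs by simp
  have A: "p j * Q \<le> R * q j * P" if j: "j \<in> J" for j
  proof -
    have "p j * Q = (\<Sum>j'\<in>J. (c * q j * q j') * h j)" unfolding Q_def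
      by (simp add: sum_distrib_left pj[OF j] mult_ac)
    also have "\<dots> \<le> (\<Sum>j'\<in>J. (c * q j * q j') * (R * h j'))"
      using c qJ0 j hR[OF j] by (intro sum_mono mult_left_mono) auto
    also have "\<dots> = R * q j * P" unfolding P_def
      by (simp add: sum_distrib_left pj mult_ac)
    finally show ?thesis .
  qed
  have B: "q j * P \<le> R * p j * Q" if j: "j \<in> J" for j
  proof -
    have "q j * P = (\<Sum>j'\<in>J. (c * q j * q j') * h j')" unfolding P_def
      by (simp add: sum_distrib_left pj mult_ac)
    also have "\<dots> \<le> (\<Sum>j'\<in>J. (c * q j * q j') * (R * h j))"
      using c qJ0 j hR[OF _ j] by (intro sum_mono mult_left_mono) auto
    also have "\<dots> = R * p j * Q" unfolding Q_def
      by (simp add: sum_distrib_left pj[OF j] mult_ac)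
    finally show ?thesis .
  qed
  have C: "\<bar>p j - q j\<bar> \<le> p j * (1 - Q) + q j * (1 - P) + (R - 1) * (p j + q j)" if j: "j \<in> J" for j
  proof -
    have a1: "R * q j * P \<le> R * q j"
      using R qJ0[OF j] P1 ep0 mult_left_mono[of P 1 "R * q j"] by simp
    have a2: "R * p j * Q \<le> R * p j"
      using R pJ0[OF j] Q1 eq0 mult_left_mono[of Q 1 "R * p j"] by simp
    have b1: "p j * Q \<le> R * q j" using A[OF j] a1 by linarith
    have b2: "q j * P \<le> R * p j" using B[OF j] a2 by linarith
    have c1: "p j - q j \<le> p j * (1 - Q) + (R - 1) * q j" using b1 by (simp add: algebra_simps)
    have c2: "q j - p j \<le> q j * (1 - P) + (R - 1) * p j" using b2 by (simp add: algebra_simps)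
    have d1: "q j * (1 - P) \<ge> 0" using qJ0[OF j] P1 ep0 by simp
    have d2: "p j * (1 - Q) \<ge> 0" using pJ0[OF j] Q1 eq0 by simp
    have d3: "(R - 1) * p j \<ge> 0" "(R - 1) * q j \<ge> 0" using R pJ0[OF j] qJ0[OF j] by simp_all
    have e: "(R - 1) * (p j + q j) = (R - 1) * p j + (R - 1) * q j" by (simp add: algebra_simps)
    show ?thesis unfolding e using c1 c2 d1 d2 d3 by linarith
  qed
  have "(\<Sum>i\<in>I. \<bar>p i - q i\<bar>) = (\<Sum>j\<in>J. \<bar>p j - q j\<bar>) + (\<Sum>i\<in>I - J. \<bar>p i - q i\<bar>)"
    using sum.subset_diff[OF JI fin, of "\<lambda>i. \<bar>p i - q i\<bar>"] by simp
  also have "(\<Sum>j\<in>J. \<bar>p j - q j\<bar>) \<le> (\<Sum>j\<in>J. p j * (1 - Q) + q j * (1 - P) + (R - 1) * (p j + q j))"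
    by (intro sum_mono C)
  also have "\<dots> = P * (1 - Q) + Q * (1 - P) + (R - 1) * (P + Q)"
  proof -
    have s1: "(\<Sum>j\<in>J. p j * (1 - Q)) = P * (1 - Q)" by (simp add: P_def sum_distrib_right)
    have s2: "(\<Sum>j\<in>J. q j * (1 - P)) = Q * (1 - P)" by (simp add: Q_def sum_distrib_right)
    have s3: "(\<Sum>j\<in>J. (R - 1) * (p j + q j)) = (R - 1) * (P + Q)"
      by (simp add: P_def Q_def sum_distrib_left[symmetric] sum.distrib)
    show ?thesis by (simp only: sum.distrib s1 s2 s3)
  qed
  also have "\<dots> \<le> (1 - Q) + (1 - P) + (R - 1) * 2"
  proof -
    have "P * (1 - Q) \<le> 1 - Q" using P0 P1 ep0 Q1 eq0 by (intro mult_left_le_one_le) auto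
    moreover have "Q * (1 - P) \<le> 1 - P" using Q0 Q1 eq0 P1 ep0 by (intro mult_left_le_one_le) auto
    moreover have "(R - 1) * (P + Q) \<le> (R - 1) * 2" using R P1 Q1 ep0 eq0 by (intro mult_left_mono) auto
    ultimately show ?thesis by linarith
  qed
  also have "(\<Sum>i\<in>I - J. \<bar>p i - q i\<bar>) \<le> (\<Sum>i\<in>I - J. p i + q i)"
  proof (intro sum_mono)
    fix i assume "i \<in> I - J"
    then have "p i \<ge> 0" "q i \<ge> 0" using p0 q0 by auto
    then show "\<bar>p i - q i\<bar> \<le> p i + q i" by linarith
  qed
  finally show ?thesis unfolding P1 Q1 by (simp add: sum.distrib)
qed



definition pp :: "nat \<Rightarrow> nat \<Rightarrow> real" where
  "pp n j = cN n j / real ((2 * n) choose n)"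
definition hh :: "nat \<Rightarrow> real" where
  "hh j = real (2 * j + 1) * real ((2 * j) choose j) / 4 ^ j"
definition alpha :: "nat \<Rightarrow> real" where
  "alpha n = 4 ^ n / (real (Suc n) * real ((2 * n) choose n))"

lemma cN_nonneg: "cN n j \<ge> 0" by (simp add: cN_eq)

lemma pp_nonneg: "pp n j \<ge> 0" by (simp add: pp_def cN_nonneg)

lemma pp_sum: "(\<Sum>j\<le>n. pp n j) = 1"
  by (simp add: pp_def sum_divide_distrib[symmetric] cN_sum0)

lemma alpha_pos: "alpha n > 0" by (simp add: alpha_def)

lemma hh_pos: "hh j > 0" by (simp add: hh_def)

lemma ratio_alg:
  fixes a b c0 d e f C s t :: real
  assumes "b \<noteq> 0" "c0 \<noteq> 0" "d \<noteq> 0" "e \<noteq> 0" "f \<noteq> 0" "C \<noteq> 0" "s \<noteq> 0" "t \<noteq> 0"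
  shows "a / (b * b * d) * e / C = (e * f * (e * f)) / (t * C) * (s * (c0 / (b * b)) / f) * (t * a / (s * c0 * d) / (e * f))"
  using assms by (simp add: field_simps)

lemma pp_ratio:
  assumes j: "2 * j \<le> n"
  shows "pp n j = alpha n * hh j * qq n j"
proof -
  have c1: "real ((2 * j) choose j) = fact (2 * j) / (fact j * fact j)"
    by (subst binomial_fact) auto
  have c2: "real (Suc n choose (2 * j + 1)) = fact (Suc n) / (fact (2 * j + 1) * fact (n - 2 * j))"
    using j by (subst binomial_fact) (auto simp: Suc_diff_le)
  have f1: "(fact (2 * j + 1) :: real) = real (2 * j + 1) * fact (2 * j)" by (simp add: fact_Suc)
  have f2: "(fact (Suc n) :: real) = real (Suc n) * fact n" by (simp add: fact_Suc)
  have p: "(2::real) ^ n = 2 ^ (n - 2 * j) * 4 ^ j"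
  proof -
    have "(4::real) ^ j = 2 ^ (2 * j)" by (simp add: power_mult)
    then show ?thesis using j by (simp add: power_add[symmetric])
  qed
  have p4: "(4::real) ^ n = 2 ^ n * 2 ^ n"
    by (simp add: power_mult_distrib[symmetric])
  define C where "C = real ((2 * n) choose n)"
  have C0: "C > 0" by (simp add: C_def)
  have "pp n j = fact n / (fact j * fact j * fact (n - 2 * j)) * 2 ^ (n - 2 * j) / C"
    unfolding pp_def cN_eq C_def using j by simp
  also have "\<dots> = (2 ^ (n - 2 * j) * 4 ^ j * (2 ^ (n - 2 * j) * 4 ^ j)) / (real (Suc n) * C)
     * (real (2 * j + 1) * (fact (2 * j) / (fact j * fact j)) / 4 ^ j)
     * (real (Suc n) * fact n / (real (2 * j + 1) * fact (2 * j) * fact (n - 2 * j)) / (2 ^ (n - 2 * j) * 4 ^ j))"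
    by (rule ratio_alg) (use C0 in auto)
  also have "\<dots> = alpha n * hh j * qq n j"
    unfolding alpha_def hh_def qq_def c1 c2 f1 f2 C_def[symmetric] p4 p[symmetric] by simp
  finally show ?thesis .
qed

lemma hh_step: "hh (Suc j) = hh j * (1 + 1 / (2 * real j + 2))"
proof -
  define C' where "C' = real ((2 * Suc j) choose Suc j)"
  define C where "C = real ((2 * j) choose j)"
  have b: "C' * (real j + 1) = C * (2 * (2 * real j + 1))"
    unfolding C'_def C_def binom_step by (simp add: field_simps)
  have b2: "C' * (2 * real j + 2) = 4 * (2 * real j + 1) * C"
    using b by (simp add: algebra_simps)
  have "hh (Suc j) * (2 * real j + 2) = (2 * real j + 3) * (C' * (2 * real j + 2)) / (4 * 4 ^ j)"
    unfolding hh_def C'_def by (simp add: field_simps)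
  also have "\<dots> = (2 * real j + 3) * (4 * (2 * real j + 1) * C) / (4 * 4 ^ j)" unfolding b2 ..
  also have "\<dots> = hh j * (2 * real j + 3)" unfolding hh_def C_def by (simp add: field_simps)
  finally have e: "hh (Suc j) * (2 * real j + 2) = hh j * (2 * real j + 3)" .
  have "hh (Suc j) = hh j * (2 * real j + 3) / (2 * real j + 2)"
    using e by (simp add: field_simps)
  also have "\<dots> = hh j * (1 + 1 / (2 * real j + 2))" by (simp add: field_simps)
  finally show ?thesis .
qed

lemma hh_mono_step: "hh j \<le> hh (Suc j)"
  unfolding hh_step using hh_pos[of j] by (simp add: field_simps)

lemma hh_mono: "j \<le> j' \<Longrightarrow> hh j \<le> hh j'"
  by (induction j' rule: dec_induct) (auto intro: order_trans[OF _ hh_mono_step])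

lemma hh_growth: "hh (j + d) \<le> hh j * exp (real d / (2 * real j + 2))"
proof (induction d)
  case 0 then show ?case by simp
next
  case (Suc d)
  have "hh (j + Suc d) = hh (j + d) * (1 + 1 / (2 * real (j + d) + 2))"
    by (simp add: hh_step)
  also have "\<dots> \<le> hh (j + d) * exp (1 / (2 * real j + 2))"
  proof (rule mult_left_mono)
    have "1 + 1 / (2 * real (j + d) + 2) \<le> 1 + 1 / (2 * real j + 2)"
      by (intro add_left_mono divide_left_mono) auto
    also have "\<dots> \<le> exp (1 / (2 * real j + 2))" by (rule exp_ge_add_one_self)
    finally show "1 + 1 / (2 * real (j + d) + 2) \<le> exp (1 / (2 * real j + 2))" .
  qed (use hh_pos in \<open>simp add: less_imp_le\<close>)
  also have "\<dots> \<le> hh j * exp (real d / (2 * real j + 2)) * exp (1 / (2 * real j + 2))"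
    by (intro mult_right_mono Suc.IH) simp
  also have "\<dots> = hh j * exp (real (Suc d) / (2 * real j + 2))"
    by (simp add: mult.assoc exp_add[symmetric] add_divide_distrib)
  finally show ?case .
qed

lemma hh_R:
  assumes D: "D \<ge> 0" and pos: "real n / 2 - D + 2 > 0"
    and j: "2 * j \<le> n" "\<bar>real (n - 2 * j) - real n / 2\<bar> \<le> D"
    and j': "2 * j' \<le> n" "\<bar>real (n - 2 * j') - real n / 2\<bar> \<le> D"
  shows "hh j \<le> exp (D / (real n / 2 - D + 2)) * hh j'"
proof (cases "j \<le> j'")
  case True
  have "hh j \<le> hh j'" by (rule hh_mono[OF True])
  also have "\<dots> \<le> exp (D / (real n / 2 - D + 2)) * hh j'"
  proof -
    have e: "1 \<le> exp (D / (real n / 2 - D + 2))" using D pos by simp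
    show ?thesis using mult_right_mono[OF e, of "hh j'"] hh_pos[of j'] by simp
  qed
  finally show ?thesis .
next
  case False
  define d where "d = j - j'"
  have d: "j = j' + d" using False by (simp add: d_def)
  have xj: "real (n - 2 * j) = real n - 2 * real j" using j(1) by (simp add: of_nat_diff)
  have xj': "real (n - 2 * j') = real n - 2 * real j'" using j'(1) by (simp add: of_nat_diff)
  have dD: "real d \<le> D"
  proof -
    have "\<bar>real n - 2 * real j - real n / 2\<bar> \<le> D" using j(2) unfolding xj .
    moreover have "\<bar>real n - 2 * real j' - real n / 2\<bar> \<le> D" using j'(2) unfolding xj' .
    moreover have "real j = real j' + real d" using d by simp
    ultimately show ?thesis by (simp add: abs_le_iff)
  qed
  have jlow: "2 * real j' + 2 \<ge> real n / 2 - D + 2" using j'(2) unfolding xj' by auto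
  have "hh j \<le> hh j' * exp (real d / (2 * real j' + 2))" unfolding d by (rule hh_growth)
  also have "real d / (2 * real j' + 2) \<le> D / (real n / 2 - D + 2)"
    using dD jlow pos D by (intro frac_le) auto
  then have "hh j' * exp (real d / (2 * real j' + 2)) \<le> hh j' * exp (D / (real n / 2 - D + 2))"
    using hh_pos[of j'] by (intro mult_left_mono) (auto simp: less_imp_le)
  finally show ?thesis by (simp add: mult.commute)
qed

lemma pp_2mom: "(\<Sum>j\<le>n. pp n j * (real (n - 2 * j) - real n / 2)^2) = varX n + (meanX n - real n / 2)^2"
proof -
  have "(\<Sum>j\<le>n. cN n j * (real (n - 2 * j) - real n / 2)^2) = S2 n + S1 n - real n * S1 n + (real n)^2 / 4 * S0 n"
    unfolding S0_def S1_def S2_def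
    by (simp add: power2_eq_square algebra_simps sum.distrib sum_subtractf sum_distrib_left sum_divide_distrib)
  then have "(\<Sum>j\<le>n. pp n j * (real (n - 2 * j) - real n / 2)^2) = (S2 n + S1 n - real n * S1 n + (real n)^2 / 4 * S0 n) / S0 n"
    by (simp add: pp_def S0_def cN_sum0 sum_divide_distrib[symmetric])
  also have "\<dots> = (S2 n + S1 n) / S0 n - real n * (S1 n / S0 n) + (real n)^2 / 4"
    using S0_pos[of n] by (simp add: field_simps)
  finally show ?thesis unfolding varX_S meanX_S by (simp add: power2_eq_square algebra_simps)
qed

lemma pp_tail:
  assumes D: "D > 0"
  shows "(\<Sum>j\<le>n. pp n j * (if \<bar>real (n - 2 * j) - real n / 2\<bar> > D then 1 else 0)) \<le> (varX n + (meanX n - real n / 2)^2) / D^2"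
proof -
  have "(\<Sum>j\<le>n. pp n j * (if \<bar>real (n - 2 * j) - real n / 2\<bar> > D then 1 else 0))
     \<le> (\<Sum>j\<le>n. pp n j * ((real (n - 2 * j) - real n / 2)^2 / D^2))"
  proof (intro sum_mono mult_left_mono pp_nonneg)
    fix j
    show "(if \<bar>real (n - 2 * j) - real n / 2\<bar> > D then 1 else 0) \<le> (real (n - 2 * j) - real n / 2)^2 / D^2"
    proof (cases "\<bar>real (n - 2 * j) - real n / 2\<bar> > D")
      case True
      then have "D^2 \<le> (real (n - 2 * j) - real n / 2)^2"
        using D by (metis abs_of_pos less_imp_le power2_abs power_mono)
      then show ?thesis using True D by simp
    qed simp
  qed
  also have "\<dots> = (\<Sum>j\<le>n. pp n j * (real (n - 2 * j) - real n / 2)^2) / D^2"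
    by (simp add: sum_divide_distrib)
  finally show ?thesis unfolding pp_2mom .
qed



lemma qq_zero: "2 * j > n \<Longrightarrow> qq n j = 0"
  unfolding qq_def by (subst binomial_eq_0) auto

lemma pp_zero: "2 * j > n \<Longrightarrow> pp n j = 0"
  by (simp add: pp_def cN_zero)

lemma tv_n_bound:
  assumes n: "n \<ge> 2" and D: "D > 1" and pos: "real n / 2 - D + 2 > 0"
  shows "(\<Sum>j\<le>n. \<bar>pp n j - qq n j\<bar>) \<le> 2 * (exp (D / (real n / 2 - D + 2)) - 1)
     + 2 * ((varX n + (meanX n - real n / 2)^2) / D^2) + 2 * (real n / (4 * (D - 1)^2))"
proof -
  define J where "J = {j \<in> {..n}. 2 * j \<le> n \<and> \<bar>real (n - 2 * j) - real n / 2\<bar> \<le> D}"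
  define ind where "ind j = (if \<bar>real (n - 2 * j) - real n / 2\<bar> > D then 1 else (0::real))" for j
  have JI: "J \<subseteq> {..n}" by (auto simp: J_def)
  have "(\<Sum>j\<le>n. \<bar>pp n j - qq n j\<bar>) \<le> 2 * (exp (D / (real n / 2 - D + 2)) - 1)
      + 2 * sum (pp n) ({..n} - J) + 2 * sum (qq n) ({..n} - J)"
  proof (rule tv_abstract[where h = hh and c = "alpha n"])
    show "pp n j = alpha n * hh j * qq n j" if "j \<in> J" for j
      using that by (intro pp_ratio) (auto simp: J_def)
    show "hh j \<le> exp (D / (real n / 2 - D + 2)) * hh j'" if "j \<in> J" "j' \<in> J" for j j'
      using that D pos by (intro hh_R) (auto simp: J_def)
    show "1 \<le> exp (D / (real n / 2 - D + 2))" using D pos by simp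
    show "0 \<le> hh j" for j using hh_pos[of j] by simp
  qed (use JI pp_nonneg qq_nonneg pp_sum qq_sum alpha_pos in auto)
  also have "sum (pp n) ({..n} - J) \<le> (\<Sum>j\<le>n. pp n j * ind j)"
  proof -
    have "sum (pp n) ({..n} - J) = (\<Sum>j\<in>{..n} - J. pp n j * ind j)"
    proof (intro sum.cong refl)
      fix j assume "j \<in> {..n} - J"
      then have "2 * j > n \<or> ind j = 1" by (auto simp: J_def ind_def)
      then show "pp n j = pp n j * ind j" using pp_zero by auto
    qed
    also have "\<dots> \<le> (\<Sum>j\<le>n. pp n j * ind j)"
      by (intro sum_mono2) (auto simp: ind_def pp_nonneg)
    finally show ?thesis .
  qed
  also have "(\<Sum>j\<le>n. pp n j * ind j) \<le> (varX n + (meanX n - real n / 2)^2) / D^2"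
    unfolding ind_def using pp_tail[of D n] D by simp
  also have "sum (qq n) ({..n} - J) \<le> (\<Sum>j\<le>n. qq n j * ind j)"
  proof -
    have "sum (qq n) ({..n} - J) = (\<Sum>j\<in>{..n} - J. qq n j * ind j)"
    proof (intro sum.cong refl)
      fix j assume "j \<in> {..n} - J"
      then have "2 * j > n \<or> ind j = 1" by (auto simp: J_def ind_def)
      then show "qq n j = qq n j * ind j" using qq_zero by auto
    qed
    also have "\<dots> \<le> (\<Sum>j\<le>n. qq n j * ind j)"
      by (intro sum_mono2) (auto simp: ind_def qq_nonneg)
    finally show ?thesis .
  qed
  also have "(\<Sum>j\<le>n. qq n j * ind j) \<le> real n / (4 * (D - 1)^2)"
    unfolding ind_def using qq_tail[of D n] D by simp
  finally show ?thesis by simp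
qed

lemma tv_lim: "(\<lambda>n. \<Sum>j\<le>n. \<bar>pp n j - qq n j\<bar>) \<longlonglongrightarrow> 0"
proof (rule LIMSEQ_I)
  fix \<epsilon> :: real assume e: "\<epsilon> > 0"
  define M where "M = sqrt (6 / \<epsilon>)"
  have M0: "M > 0" using e by (simp add: M_def)
  have M2: "M^2 = 6 / \<epsilon>" using e by (simp add: M_def)
  have lim: "(\<lambda>n. exp (4 * M / sqrt (real n))) \<longlonglongrightarrow> exp 0"
    by (intro tendsto_exp tendsto_divide_0[OF tendsto_const] filterlim_at_top_imp_at_infinity
        filterlim_compose[OF sqrt_at_top filterlim_real_sequentially])
  have "eventually (\<lambda>n. exp (4 * M / sqrt (real n)) < 1 + \<epsilon> / 4) sequentially"
    using order_tendstoD(2)[OF lim, of "1 + \<epsilon> / 4"] e by simp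
  then obtain N1 where N1: "\<And>n. n \<ge> N1 \<Longrightarrow> exp (4 * M / sqrt (real n)) < 1 + \<epsilon> / 4"
    by (auto simp: eventually_sequentially)
  define N where "N = max (max N1 8) (max (nat \<lceil>16 * M^2\<rceil>) (nat \<lceil>4 / M^2\<rceil>))"
  show "\<exists>no. \<forall>n\<ge>no. norm ((\<Sum>j\<le>n. \<bar>pp n j - qq n j\<bar>) - 0) < \<epsilon>"
  proof (intro exI allI impI)
    fix n assume nN: "n \<ge> N"
    have n8: "real n \<ge> 8" and n1: "n \<ge> N1" using nN by (auto simp: N_def)
    have n16: "real n \<ge> 16 * M^2" using nN unfolding N_def by linarith
    have n4: "real n \<ge> 4 / M^2" using nN unfolding N_def by linarith
    define D where "D = M * sqrt (real n)"
    have sq: "sqrt (real n) ^ 2 = real n" by simp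
    have sqpos: "sqrt (real n) > 0" using n8 by simp
    have D2: "D^2 = M^2 * real n" unfolding D_def by (simp add: power_mult_distrib)
    have Dge2: "D \<ge> 2"
    proof -
      have "D^2 \<ge> 4" unfolding D2 using n4 M0 by (simp add: field_simps)
      moreover have "D \<ge> 0" unfolding D_def using M0 by simp
      ultimately show ?thesis using power2_le_imp_le[of 2 D] by simp
    qed
    have Dle: "D \<le> real n / 4"
    proof -
      have "sqrt (real n) \<ge> 4 * M"
        using real_le_rsqrt[of "4 * M" "real n"] n16 by (simp add: power_mult_distrib)
      then have "4 * M * sqrt (real n) \<le> sqrt (real n) * sqrt (real n)"
        using sqpos by (intro mult_right_mono) auto
      then show ?thesis unfolding D_def by simp
    qed
    have pos: "real n / 2 - D + 2 > 0" using Dle n8 by linarith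
    have n2: "n \<ge> 2" using n8 by simp
    have tv: "(\<Sum>j\<le>n. \<bar>pp n j - qq n j\<bar>) \<le> 2 * (exp (D / (real n / 2 - D + 2)) - 1)
      + 2 * ((varX n + (meanX n - real n / 2)^2) / D^2) + 2 * (real n / (4 * (D - 1)^2))"
      using tv_n_bound[OF n2 _ pos] Dge2 by simp
    have t1: "2 * (exp (D / (real n / 2 - D + 2)) - 1) < \<epsilon> / 2"
    proof -
      have "D / (real n / 2 - D + 2) \<le> D / (real n / 4)"
        using Dle n8 Dge2 by (intro divide_left_mono) auto
      also have "D / (real n / 4) = 4 * M / sqrt (real n)"
      proof -
        have g: "M * s / (s * s / 4) = 4 * M / s" if "s > 0" for s :: real
          using that by (simp add: field_simps)
        have "real n = sqrt (real n) * sqrt (real n)" by simp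
        then have "D / (real n / 4) = M * sqrt (real n) / (sqrt (real n) * sqrt (real n) / 4)"
          unfolding D_def by metis
        then show ?thesis using g[OF sqpos] by (rule trans)
      qed
      finally have "exp (D / (real n / 2 - D + 2)) \<le> exp (4 * M / sqrt (real n))" by (simp only: exp_le_cancel_iff)
      then have "exp (D / (real n / 2 - D + 2)) < 1 + \<epsilon> / 4" using N1[OF n1] by (rule le_less_trans)
      then show ?thesis by simp
    qed
    have t2: "2 * ((varX n + (meanX n - real n / 2)^2) / D^2) \<le> 1 / M^2"
    proof -
      have "varX n \<le> real n / 4 + 1" using var_bound[OF n2] by simp
      moreover have "(meanX n - real n / 2)^2 \<le> 1"
      proof -
        have "\<bar>meanX n - real n / 2\<bar> \<le> \<bar>1\<bar>" using mean_bound[of n] n2 by simp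
        then show ?thesis unfolding abs_le_square_iff by simp
      qed
      ultimately have "varX n + (meanX n - real n / 2)^2 \<le> real n / 4 + 2" by simp
      then have "2 * ((varX n + (meanX n - real n / 2)^2) / D^2) \<le> 2 * ((real n / 4 + 2) / D^2)"
        using Dge2 by (intro mult_left_mono divide_right_mono) auto
      also have "\<dots> = (real n / 2 + 4) / (M^2 * real n)"
      proof -
        have "M^2 \<noteq> 0" "real n \<noteq> 0" using M0 n8 by auto
        then show ?thesis unfolding D2 by (simp add: field_simps)
      qed
      also have "\<dots> \<le> 1 / M^2" using n8 M0 by (simp add: field_simps)
      finally show ?thesis .
    qed
    have t3: "2 * (real n / (4 * (D - 1)^2)) \<le> 2 / M^2"
    proof -
      have "(D / 2)^2 \<le> (D - 1)^2" using Dge2 by (intro power_mono) auto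
      then have "M^2 * real n / 4 \<le> (D - 1)^2" unfolding power_divide D2 by simp
      then have "real n / (4 * (D - 1)^2) \<le> real n / (4 * (M^2 * real n / 4))"
        using n8 M0 Dge2 by (intro divide_left_mono mult_left_mono) auto
      also have "\<dots> = 1 / M^2" using n8 by simp
      finally show ?thesis by simp
    qed
    have "3 / M^2 = \<epsilon> / 2" unfolding M2 using e by simp
    then show "norm ((\<Sum>j\<le>n. \<bar>pp n j - qq n j\<bar>) - 0) < \<epsilon>"
      using tv t1 t2 t3 by (simp add: sum_nonneg)
  qed
qed



lemma cts_step_lip:
  assumes "x < y"
  shows "\<bar>cts_step x y a - cts_step x y b\<bar> \<le> \<bar>a - b\<bar> / (y - x)"
proof -
  have cl: "cts_step x y t = max 0 (min 1 ((y - t) / (y - x)))" for t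
    using assms by (auto simp: cts_step_def field_simps max_def min_def)
  have "\<bar>max 0 (min 1 u) - max 0 (min 1 v)\<bar> \<le> \<bar>u - v\<bar>" for u v :: real
    by (auto simp: max_def min_def abs_le_iff)
  then have "\<bar>cts_step x y a - cts_step x y b\<bar> \<le> \<bar>(y - a) / (y - x) - (y - b) / (y - x)\<bar>"
    unfolding cl .
  also have "\<dots> = \<bar>a - b\<bar> / (y - x)"
    using assms by (simp add: diff_divide_distrib[symmetric] abs_divide abs_minus_commute)
  finally show ?thesis .
qed

lemma cts_step_bounds: "0 \<le> cts_step x y a" "x < y \<Longrightarrow> cts_step x y a \<le> 1"
  by (auto simp: cts_step_def field_simps)

lemma abs_le_amgm:
  fixes a \<sigma> :: real
  assumes "\<sigma> > 0"
  shows "\<bar>a\<bar> \<le> (a^2 / \<sigma> + \<sigma>) / 2"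
proof -
  have "0 \<le> (\<bar>a\<bar> - \<sigma>)^2" by simp
  then have "2 * \<sigma> * \<bar>a\<bar> \<le> a^2 + \<sigma>^2" by (simp add: power2_eq_square algebra_simps)
  then show ?thesis using assms by (simp add: field_simps power2_eq_square)
qed

lemma stepA_gen:
  fixes w x :: "nat \<Rightarrow> real"
  assumes fin: "finite I" and w0: "\<And>j. j \<in> I \<Longrightarrow> w j \<ge> 0" and ws: "sum w I = 1"
    and var: "(\<Sum>j\<in>I. w j * (x j - \<mu>)^2) = \<sigma>^2" and \<sigma>: "\<sigma> > 0" and s: "s > 0"
  shows "(\<Sum>j\<in>I. w j * \<bar>(x j - \<mu>) / \<sigma> - (x j - m) / s\<bar>) \<le> \<bar>1 - \<sigma> / s\<bar> + \<bar>\<mu> - m\<bar> / s"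
proof -
  have pt: "\<bar>(x j - \<mu>) / \<sigma> - (x j - m) / s\<bar> \<le> ((x j - \<mu>)^2 / \<sigma> + \<sigma>) / 2 * \<bar>1 / \<sigma> - 1 / s\<bar> + \<bar>\<mu> - m\<bar> / s" for j
  proof -
    have eqd: "(x j - \<mu>) / \<sigma> - (x j - m) / s = (x j - \<mu>) * (1 / \<sigma> - 1 / s) + (m - \<mu>) / s"
      using \<sigma> s by (simp add: field_simps)
    have "\<bar>(x j - \<mu>) / \<sigma> - (x j - m) / s\<bar> \<le> \<bar>x j - \<mu>\<bar> * \<bar>1 / \<sigma> - 1 / s\<bar> + \<bar>\<mu> - m\<bar> / s"
      unfolding eqd
    proof -
      have "\<bar>(x j - \<mu>) * (1 / \<sigma> - 1 / s) + (m - \<mu>) / s\<bar> \<le> \<bar>(x j - \<mu>) * (1 / \<sigma> - 1 / s)\<bar> + \<bar>(m - \<mu>) / s\<bar>"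
        by (rule abs_triangle_ineq)
      also have "\<bar>(m - \<mu>) / s\<bar> = \<bar>\<mu> - m\<bar> / s" using s by (simp add: abs_divide abs_minus_commute)
      finally show "\<bar>(x j - \<mu>) * (1 / \<sigma> - 1 / s) + (m - \<mu>) / s\<bar> \<le> \<bar>x j - \<mu>\<bar> * \<bar>1 / \<sigma> - 1 / s\<bar> + \<bar>\<mu> - m\<bar> / s"
        by (simp add: abs_mult)
    qed
    also have "\<bar>x j - \<mu>\<bar> * \<bar>1 / \<sigma> - 1 / s\<bar> \<le> ((x j - \<mu>)^2 / \<sigma> + \<sigma>) / 2 * \<bar>1 / \<sigma> - 1 / s\<bar>"
      by (intro mult_right_mono abs_le_amgm \<sigma>) simp
    finally show ?thesis by simp
  qed
  have "(\<Sum>j\<in>I. w j * \<bar>(x j - \<mu>) / \<sigma> - (x j - m) / s\<bar>)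
      \<le> (\<Sum>j\<in>I. w j * (((x j - \<mu>)^2 / \<sigma> + \<sigma>) / 2 * \<bar>1 / \<sigma> - 1 / s\<bar> + \<bar>\<mu> - m\<bar> / s))"
    by (intro sum_mono mult_left_mono pt w0)
  also have "\<dots> = ((\<Sum>j\<in>I. w j * (x j - \<mu>)^2) / \<sigma> + \<sigma> * sum w I) / 2 * \<bar>1 / \<sigma> - 1 / s\<bar> + \<bar>\<mu> - m\<bar> / s * sum w I"
  proof -
    define c where "c = \<bar>1 / \<sigma> - 1 / s\<bar>"
    define d where "d = \<bar>\<mu> - m\<bar> / s"
    have "(\<Sum>j\<in>I. w j * (((x j - \<mu>)^2 / \<sigma> + \<sigma>) / 2 * c + d))
       = (\<Sum>j\<in>I. c / (2 * \<sigma>) * (w j * (x j - \<mu>)^2) + (c * \<sigma> / 2 + d) * w j)"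
      by (intro sum.cong refl) (simp add: field_simps)
    also have "\<dots> = c / (2 * \<sigma>) * (\<Sum>j\<in>I. w j * (x j - \<mu>)^2) + (c * \<sigma> / 2 + d) * sum w I"
      by (simp add: sum.distrib sum_distrib_left)
    also have "\<dots> = ((\<Sum>j\<in>I. w j * (x j - \<mu>)^2) / \<sigma> + \<sigma> * sum w I) / 2 * c + d * sum w I"
      by (simp add: field_simps)
    finally show ?thesis unfolding c_def d_def .
  qed
  also have "\<dots> = \<sigma> * \<bar>1 / \<sigma> - 1 / s\<bar> + \<bar>\<mu> - m\<bar> / s"
    unfolding var ws using \<sigma> by (simp add: power2_eq_square)
  also have "\<sigma> * \<bar>1 / \<sigma> - 1 / s\<bar> = \<bar>1 - \<sigma> / s\<bar>"
    using \<sigma> by (simp add: abs_mult[symmetric] field_simps)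
  finally show ?thesis .
qed



lemma pp_var: "(\<Sum>j\<le>n. pp n j * (real (n - 2 * j) - meanX n)^2) = varX n"
proof -
  have "varX n = measure_pmf.expectation (unifG n) (\<lambda>w. (\<lambda>k. (real k - meanX n)^2) (da n w))"
    unfolding varX_def meanX_def by simp
  also have "\<dots> = (\<Sum>j\<le>n. cN n j * (real (n - 2 * j) - meanX n)^2) / real ((2 * n) choose n)"
    by (rule expect_G)
  finally show ?thesis by (simp add: pp_def sum_divide_distrib)
qed

lemma cts_meas: "x < y \<Longrightarrow> cts_step x y \<in> borel_measurable borel"
  by (intro borel_measurable_continuous_onI uniformly_continuous_imp_continuous cts_step_uniformly_continuous)

lemma cts_cont: "x < y \<Longrightarrow> isCont (cts_step x y) a"
  using uniformly_continuous_imp_continuous[OF cts_step_uniformly_continuous, of x y]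
  by (simp add: continuous_on_eq_continuous_at)

lemma EX_eq:
  assumes "x < y"
  shows "integral\<^sup>L (distr (measure_pmf (unifG n)) borel (\<lambda>w. (real (da n w) - meanX n) / sqrt (varX n))) (cts_step x y)
    = (\<Sum>j\<le>n. pp n j * cts_step x y ((real (n - 2 * j) - meanX n) / sqrt (varX n)))"
proof -
  have "integral\<^sup>L (distr (measure_pmf (unifG n)) borel (\<lambda>w. (real (da n w) - meanX n) / sqrt (varX n))) (cts_step x y)
     = measure_pmf.expectation (unifG n) (\<lambda>w. (\<lambda>k. cts_step x y ((real k - meanX n) / sqrt (varX n))) (da n w))"
    using assms by (subst integral_distr) (auto intro: cts_meas)
  also have "\<dots> = (\<Sum>j\<le>n. cN n j * cts_step x y ((real (n - 2 * j) - meanX n) / sqrt (varX n))) / real ((2 * n) choose n)"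
    by (rule expect_G)
  finally show ?thesis by (simp add: pp_def sum_divide_distrib)
qed

lemma T3_eq:
  assumes "x < y"
  shows "integral\<^sup>L (distr (measure_pmf (binomial_pmf n (1/2))) borel (\<lambda>k. (2 * real k - real n) / sqrt (real n))) (cts_step x y)
    = (\<Sum>k\<le>n. real (n choose k) / 2 ^ n * cts_step x y ((2 * real k - real n) / sqrt (real n)))"
proof -
  have "integral\<^sup>L (distr (measure_pmf (binomial_pmf n (1/2))) borel (\<lambda>k. (2 * real k - real n) / sqrt (real n))) (cts_step x y)
     = (\<integral>k. cts_step x y ((2 * real k - real n) / sqrt (real n)) \<partial>measure_pmf (binomial_pmf n (1/2)))"
    using assms by (subst integral_distr) (auto intro: cts_meas)
  also have "\<dots> = (\<Sum>k\<le>n. cts_step x y ((2 * real k - real n) / sqrt (real n)) * pmf (binomial_pmf n (1/2)) k)"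
    by (rule integral_measure_pmf_real) auto
  also have "\<dots> = (\<Sum>k\<le>n. real (n choose k) / 2 ^ n * cts_step x y ((2 * real k - real n) / sqrt (real n)))"
  proof (intro sum.cong refl)
    fix k assume "k \<in> {..n}"
    then have "(1/2::real) ^ k * (1/2) ^ (n - k) = 1 / 2 ^ n"
      by (simp add: power_add[symmetric] power_one_over)
    then show "cts_step x y ((2 * real k - real n) / sqrt (real n)) * pmf (binomial_pmf n (1/2)) k
        = real (n choose k) / 2 ^ n * cts_step x y ((2 * real k - real n) / sqrt (real n))"
      by (simp add: mult_ac)
  qed
  finally show ?thesis .
qed

lemma inv_sqrt_lim: "(\<lambda>n. c / sqrt (real n)) \<longlonglongrightarrow> 0"
  by (intro tendsto_divide_0[OF tendsto_const] filterlim_at_top_imp_at_infinity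
        filterlim_compose[OF sqrt_at_top filterlim_real_sequentially])

lemma var_ratio_lim: "(\<lambda>n. sqrt (4 * varX n / real n)) \<longlonglongrightarrow> 1"
proof -
  have "(\<lambda>n. 4 * varX n / real n - 1) \<longlonglongrightarrow> 0"
  proof (rule Lim_null_comparison)
    show "eventually (\<lambda>n. norm (4 * varX n / real n - 1) \<le> 4 * (1 / real n)) sequentially"
    proof (rule eventually_sequentiallyI[of 2])
      fix n :: nat assume n: "n \<ge> 2"
      have "4 * varX n / real n - 1 = 4 * (varX n - real n / 4) / real n" using n by (simp add: field_simps)
      then have "norm (4 * varX n / real n - 1) = \<bar>4 * (varX n - real n / 4) / real n\<bar>"
        by (simp only: real_norm_def)
      also have "\<dots> = 4 * \<bar>varX n - real n / 4\<bar> / real n"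
        unfolding abs_divide abs_mult by simp
      also have "\<dots> \<le> 4 * 1 / real n" using var_bound[OF n] n by (intro divide_right_mono) auto
      finally show "norm (4 * varX n / real n - 1) \<le> 4 * (1 / real n)" by simp
    qed
    show "(\<lambda>n. 4 * (1 / real n)) \<longlonglongrightarrow> 0"
      by (intro tendsto_mult_right_zero lim_const_over_n)
  qed
  then have "(\<lambda>n. 4 * varX n / real n) \<longlonglongrightarrow> 1" by (simp add: LIM_zero_iff)
  then have "(\<lambda>n. sqrt (4 * varX n / real n)) \<longlonglongrightarrow> sqrt 1" by (rule tendsto_real_sqrt)
  then show ?thesis by simp
qed

lemma main_conv:
  assumes xy: "x < y"
  shows "(\<lambda>n. integral\<^sup>L (distr (measure_pmf (unifG n)) borel (\<lambda>w. (real (da n w) - meanX n) / sqrt (varX n))) (cts_step x y))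
     \<longlonglongrightarrow> integral\<^sup>L std_normal_distribution (cts_step x y)"
proof -
  define f where "f = cts_step x y"
  define L where "L = 1 / (y - x)"
  have L0: "L > 0" using xy by (simp add: L_def)
  have flip: "\<bar>f a - f b\<bar> \<le> L * \<bar>a - b\<bar>" for a b
    using cts_step_lip[OF xy, of a b] by (simp add: f_def L_def)
  have f01: "0 \<le> f a" "f a \<le> 1" for a using cts_step_bounds[of x y a] xy by (auto simp: f_def)
  have fabs: "\<bar>f a\<bar> \<le> 1" for a using f01[of a] by simp
  define EXn where "EXn n = (\<Sum>j\<le>n. pp n j * f ((real (n - 2 * j) - meanX n) / sqrt (varX n)))" for n
  define T1 where "T1 n = (\<Sum>j\<le>n. pp n j * f ((2 * real (n - 2 * j) - real n) / sqrt (real n)))" for n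
  define T2 where "T2 n = (\<Sum>j\<le>n. qq n j * f ((2 * real (n - 2 * j) - real n) / sqrt (real n)))" for n
  define T3 where "T3 n = (\<Sum>k\<le>n. real (n choose k) / 2 ^ n * f ((2 * real k - real n) / sqrt (real n)))" for n
  define b1 where "b1 n = L * (\<bar>1 - sqrt (4 * varX n / real n)\<bar> + 2 / sqrt (real n))" for n
  define b2 where "b2 n = (\<Sum>j\<le>n. \<bar>pp n j - qq n j\<bar>)" for n
  define b3 where "b3 n = 2 * L / sqrt (real n)" for n
  have T3lim: "T3 \<longlonglongrightarrow> integral\<^sup>L std_normal_distribution f"
  proof -
    have "(\<lambda>n. integral\<^sup>L (distr (measure_pmf (binomial_pmf n (1/2))) borel (\<lambda>k. (2 * real k - real n) / sqrt (real n))) f)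
        \<longlonglongrightarrow> integral\<^sup>L std_normal_distribution f"
      using f01 by (intro weak_conv_imp_integral_bdd_continuous_conv[OF rd_pmf real_dist_normal_dist binom_clt, of f 1])
        (auto simp: f_def cts_cont[OF xy])
    then show ?thesis unfolding f_def T3_def T3_eq[OF xy] .
  qed
  have ev: "eventually (\<lambda>n. norm (EXn n - T3 n) \<le> b1 n + b2 n + b3 n) sequentially"
  proof (rule eventually_sequentiallyI[of 8])
    fix n :: nat assume n8: "n \<ge> 8"
    have n2: "n \<ge> 2" using n8 by simp
    have varpos: "varX n > 0" using var_bound[OF n2] n8 by simp
    define \<sigma> where "\<sigma> = sqrt (varX n)"
    define s where "s = sqrt (real n) / 2"
    have \<sigma>0: "\<sigma> > 0" using varpos by (simp add: \<sigma>_def)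
    have s0: "s > 0" using n8 by (simp add: s_def)
    have \<sigma>2: "\<sigma>^2 = varX n" using varpos by (simp add: \<sigma>_def)
    have Vs: "(2 * a - real n) / sqrt (real n) = (a - real n / 2) / s" for a
      using s0 by (simp add: s_def field_simps)
    have D1: "\<bar>EXn n - T1 n\<bar> \<le> b1 n"
    proof -
      have "\<bar>EXn n - T1 n\<bar> = \<bar>\<Sum>j\<le>n. pp n j * (f ((real (n - 2 * j) - meanX n) / \<sigma>) - f ((real (n - 2 * j) - real n / 2) / s))\<bar>"
        unfolding EXn_def T1_def Vs \<sigma>_def by (simp add: sum_subtractf algebra_simps)
      also have "\<dots> \<le> (\<Sum>j\<le>n. pp n j * (L * \<bar>(real (n - 2 * j) - meanX n) / \<sigma> - (real (n - 2 * j) - real n / 2) / s\<bar>))"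
        by (rule order_trans[OF sum_abs]) (auto simp: abs_mult pp_nonneg intro!: sum_mono mult_left_mono flip)
      also have "\<dots> = L * (\<Sum>j\<le>n. pp n j * \<bar>(real (n - 2 * j) - meanX n) / \<sigma> - (real (n - 2 * j) - real n / 2) / s\<bar>)"
        by (simp add: sum_distrib_left mult_ac)
      also have "\<dots> \<le> L * (\<bar>1 - \<sigma> / s\<bar> + \<bar>meanX n - real n / 2\<bar> / s)"
        using L0 by (intro mult_left_mono stepA_gen) (auto simp: pp_nonneg pp_sum pp_var \<sigma>2 \<sigma>0 s0)
      also have "\<dots> \<le> b1 n"
      proof -
        have "\<sigma> / s = sqrt (4 * varX n / real n)"
          unfolding \<sigma>_def s_def by (simp add: real_sqrt_divide real_sqrt_mult)
        moreover have "\<bar>meanX n - real n / 2\<bar> / s \<le> 2 / sqrt (real n)"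
          using mean_bound[of n] n8 s0 by (simp add: s_def divide_right_mono)
        ultimately show ?thesis unfolding b1_def using L0 by (intro mult_left_mono) auto
      qed
      finally show ?thesis .
    qed
    have D2: "\<bar>T1 n - T2 n\<bar> \<le> b2 n"
    proof -
      have "\<bar>T1 n - T2 n\<bar> = \<bar>\<Sum>j\<le>n. (pp n j - qq n j) * f ((2 * real (n - 2 * j) - real n) / sqrt (real n))\<bar>"
        unfolding T1_def T2_def by (simp add: sum_subtractf algebra_simps)
      also have "\<dots> \<le> (\<Sum>j\<le>n. \<bar>pp n j - qq n j\<bar>)"
        by (rule order_trans[OF sum_abs]) (auto simp: abs_mult intro!: sum_mono mult_left_le fabs)
      finally show ?thesis unfolding b2_def .
    qed
    have D3: "\<bar>T2 n - T3 n\<bar> \<le> b3 n"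
    proof -
      have T2': "T2 n = (\<Sum>k\<le>n. real (n choose k) / 2 ^ n * f ((2 * real (rnd n k) - real n) / sqrt (real n)))"
        unfolding T2_def using qq_expect[of n "\<lambda>m. f ((2 * real m - real n) / sqrt (real n))"] by simp
      have "\<bar>T2 n - T3 n\<bar> = \<bar>\<Sum>k\<le>n. real (n choose k) / 2 ^ n * (f ((2 * real (rnd n k) - real n) / sqrt (real n)) - f ((2 * real k - real n) / sqrt (real n)))\<bar>"
        unfolding T2' T3_def by (simp add: sum_subtractf algebra_simps)
      also have "\<dots> \<le> (\<Sum>k\<le>n. real (n choose k) / 2 ^ n * (2 * L / sqrt (real n)))"
      proof (rule order_trans[OF sum_abs], intro sum_mono)
        fix k assume k: "k \<in> {..n}"
        have a: "\<bar>f ((2 * real (rnd n k) - real n) / sqrt (real n)) - f ((2 * real k - real n) / sqrt (real n))\<bar>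
            \<le> L * \<bar>(2 * real (rnd n k) - real n) / sqrt (real n) - (2 * real k - real n) / sqrt (real n)\<bar>"
          by (rule flip)
        have "\<bar>(2 * real (rnd n k) - real n) / sqrt (real n) - (2 * real k - real n) / sqrt (real n)\<bar>
            = 2 * \<bar>real (rnd n k) - real k\<bar> / sqrt (real n)"
        proof -
          have "(2 * real (rnd n k) - real n) / sqrt (real n) - (2 * real k - real n) / sqrt (real n)
              = 2 * (real (rnd n k) - real k) / sqrt (real n)"
            by (simp add: diff_divide_distrib[symmetric] algebra_simps)
          moreover have "\<bar>2 * real (rnd n k) - 2 * real k\<bar> = 2 * \<bar>real (rnd n k) - real k\<bar>"
          proof -
            have "2 * real (rnd n k) - 2 * real k = 2 * (real (rnd n k) - real k)" by (simp add: algebra_simps)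
            then show ?thesis by (simp only: abs_mult abs_numeral)
          qed
          ultimately show ?thesis by (simp add: abs_divide)
        qed
        also have "\<dots> \<le> 2 * 1 / sqrt (real n)"
          using rnd_close[of k n] k by (intro divide_right_mono mult_left_mono) auto
        finally have b: "\<bar>(2 * real (rnd n k) - real n) / sqrt (real n) - (2 * real k - real n) / sqrt (real n)\<bar>
            \<le> 2 / sqrt (real n)" by simp
        have "\<bar>f ((2 * real (rnd n k) - real n) / sqrt (real n)) - f ((2 * real k - real n) / sqrt (real n))\<bar>
            \<le> L * (2 / sqrt (real n))"
          using a mult_left_mono[OF b, of L] L0 by simp
        then have "\<bar>f ((2 * real (rnd n k) - real n) / sqrt (real n)) - f ((2 * real k - real n) / sqrt (real n))\<bar>
            \<le> 2 * L / sqrt (real n)" by (simp add: ac_simps)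
        then show "\<bar>real (n choose k) / 2 ^ n * (f ((2 * real (rnd n k) - real n) / sqrt (real n)) - f ((2 * real k - real n) / sqrt (real n)))\<bar>
            \<le> real (n choose k) / 2 ^ n * (2 * L / sqrt (real n))"
        proof -
          assume h: "\<bar>f ((2 * real (rnd n k) - real n) / sqrt (real n)) - f ((2 * real k - real n) / sqrt (real n))\<bar>
            \<le> 2 * L / sqrt (real n)"
          have c0: "real (n choose k) / 2 ^ n \<ge> 0" by simp
          show ?thesis unfolding abs_mult abs_of_nonneg[OF c0] by (rule mult_left_mono[OF h c0])
        qed
      qed
      also have "\<dots> = 2 * L / sqrt (real n)"
        by (simp add: sum_distrib_right[symmetric] sum_divide_distrib[symmetric] binom_row_real)
      finally show ?thesis unfolding b3_def .
    qed
    have "EXn n - T3 n = (EXn n - T1 n) + (T1 n - T2 n) + (T2 n - T3 n)" by simp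
    then show "norm (EXn n - T3 n) \<le> b1 n + b2 n + b3 n"
      using D1 D2 D3 by simp
  qed
  have lim0: "(\<lambda>n. b1 n + b2 n + b3 n) \<longlonglongrightarrow> 0"
  proof -
    have "(\<lambda>n. \<bar>1 - sqrt (4 * varX n / real n)\<bar>) \<longlonglongrightarrow> 0"
      using tendsto_diff[OF tendsto_const[of 1] var_ratio_lim] by (simp add: tendsto_rabs_zero)
    then have "b1 \<longlonglongrightarrow> L * (0 + 0)"
      unfolding b1_def by (intro tendsto_mult tendsto_const tendsto_add inv_sqrt_lim)
    moreover have "b2 \<longlonglongrightarrow> 0" unfolding b2_def by (rule tv_lim)
    moreover have "b3 \<longlonglongrightarrow> 0" unfolding b3_def by (rule inv_sqrt_lim)
    ultimately show ?thesis using tendsto_add[of b1 0 _ b2 0] tendsto_add[of "\<lambda>n. b1 n + b2 n" 0 _ b3 0] by simp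
  qed
  have "(\<lambda>n. EXn n - T3 n) \<longlonglongrightarrow> 0" by (rule Lim_null_comparison[OF ev lim0])
  then have "EXn \<longlonglongrightarrow> integral\<^sup>L std_normal_distribution f" by (rule Lim_transform[OF T3lim])
  then show ?thesis unfolding EXn_def f_def EX_eq[OF xy] by simp
qed

theorem corollary3p2:
  shows "weak_conv_m
           (\<lambda>n. distr (measure_pmf (unifG n)) borel
                   (\<lambda>w. (real (da n w) - meanX n) / sqrt (varX n)))
           std_normal_distribution
       \<and> (\<lambda>n. meanX n - real n / 2) \<in> O(\<lambda>_. 1)
       \<and> (\<lambda>n. varX n - real n / 4) \<in> O(\<lambda>_. 1)"
proof (intro conjI mean_O var_O)
  show "weak_conv_m (\<lambda>n. distr (measure_pmf (unifG n)) borel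
                   (\<lambda>w. (real (da n w) - meanX n) / sqrt (varX n))) std_normal_distribution"
    by (rule integral_cts_step_conv_imp_weak_conv[OF rd_pmf real_dist_normal_dist main_conv])
qed

end
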